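(* Consider the system of ordinary differential equations, for $t\ge 0$, \begin{align*} \dot S &= \Lambda + \omega m Q - \big[\lambda(t)(1-p) + \phi p + \mu\big] S,\\ \dot A &= \lambda(t)(1-p) S - (q\upsilon+\mu) A,\\ \dot I &= q\upsilon A - (\delta_1+\mu) I,\\ \dot Q &= \phi p S + \delta_1 f_1 I + \delta_2(1-f_2-f_3) H - (\omega m+\mu) Q,\\ \dot H &= \delta_1(1-f_1) I + \eta(1-\kappa) H_{IC} - \big[\delta_2(1-f_2-f_3) + \delta_2 f_2 + \alpha_1 f_3 + \mu\big] H,\\ \dot H_{IC} &= \delta_2 f_2 H - \big[\eta(1-\kappa) + \alpha_2\kappa + \mu\big] H_{IC}, \end{align*} where $N(t)=S+A+I+Q+H+H_{IC}$ and $\lambda(t)=\beta\,[A(t)+I(t)+l_H H(t)]/N(t)$. Set $a_0=q\upsilon+\mu$, $a_1=\delta_1+\mu$, $a_2=m\omega+\mu$, $a_3=\delta_2(1-f_2-f_3)+\delta_2 f_2+\alpha_1 f_3+\mu$, $a_6=\delta_1(1-f_1)$, $\eta_\kappa=\eta(1-\kappa)$, $a_7=\alpha_2\kappa+\eta_\kappa+\mu$, $\chi=a_3a_7-\delta_2\eta_\kappa f_2$, and define $$R_0=\frac{\beta\, a_2\,(1-p)\Big[\big(l_H\, a_6\, q\upsilon+(a_1+q\upsilon)a_3\big)a_7-\delta_2\,\eta_\kappa\, f_2\,(q\upsilon+a_1)\Big]}{a_0\,a_1\,\chi\,(p\phi+a_2)}.$$ Then the disease-free equilibrium $$\Sigma_0=\Big(\frac{\Lambda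 a_2}{(p\phi+a_2)\mu},\,0,\,0,\,\frac{p\phi\Lambda}{(p\phi+a_2)\mu},\,0,\,0\Big)$$ (in the order $(S,A,I,Q,H,H_{IC})$) is locally asymptotically stable if $R_0<1$ and unstable if $R_0>1$.
   Context: This is a compartmental COVID-19 model (susceptible $S$, asymptomatic infected $A$, symptomatic infected $I$, quarantined $Q$, hospitalized $H$, hospitalized in intensive care $H_{IC}$). All parameters are non-negative: $\Lambda>0$, $\mu>0$, $\beta>0$, $l_H>0$, $\phi,\upsilon,\delta_1,\delta_2,\eta,\omega,\alpha_1,\alpha_2>0$, and $p,q,f_1,f_2,f_3,\kappa,m\in[0,1]$ with $1-f_2-f_3\in[0,1]$. The relative transmissibility of class $A$ is taken equal to $1$. $R_0$ is called the basic reproduction number. *)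

theory Defs
  imports "HOL-Analysis.Analysis"
begin

text \<open>State vector in the order (S, A, I, Q, H, H_IC).\<close>
type_synonym state = "real \<times> real \<times> real \<times> real \<times> real \<times> real"

record covid_params =
  c_Lambda :: real
  c_mu :: real
  c_beta :: real
  c_lH :: real
  c_phi :: real
  c_upsilon :: real
  c_delta1 :: real
  c_delta2 :: real
  c_eta :: real
  c_omega :: real
  c_alpha1 :: real
  c_alpha2 :: real
  c_p :: real
  c_q :: real
  c_f1 :: real
  c_f2 :: real
  c_f3 :: real
  c_kappa :: real
  c_m :: real

definition admissible_params :: "covid_params \<Rightarrow> bool" where
  "admissible_params P \<longleftrightarrow>
     c_Lambda P > 0 \<and> c_mu P > 0 \<and> c_beta P > 0 \<and> c_lH P > 0 \<and>
     c_phi P > 0 \<and> c_upsilon P > 0 \<and> c_delta1 P > 0 \<and> c_delta2 P > 0 \<and>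
     c_eta P > 0 \<and> c_omega P > 0 \<and> c_alpha1 P > 0 \<and> c_alpha2 P > 0 \<and>
     c_p P \<in> {0..1} \<and> c_q P \<in> {0..1} \<and> c_f1 P \<in> {0..1} \<and> c_f2 P \<in> {0..1} \<and>
     c_f3 P \<in> {0..1} \<and> c_kappa P \<in> {0..1} \<and> c_m P \<in> {0..1} \<and>
     1 - c_f2 P - c_f3 P \<in> {0..1}"

definition covid_field :: "covid_params \<Rightarrow> state \<Rightarrow> state" where
  "covid_field P X = (case X of (S, A, I, Q, H, HIC) \<Rightarrow>
     let N = S + A + I + Q + H + HIC;
         lam = c_beta P * (A + I + c_lH P * H) / N;
         \<Lambda> = c_Lambda P; \<mu> = c_mu P; \<phi> = c_phi P; \<upsilon> = c_upsilon P;
         \<delta>1 = c_delta1 P; \<delta>2 = c_delta2 P; \<eta> = c_eta P; \<omega> = c_omega P;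
         \<alpha>1 = c_alpha1 P; \<alpha>2 = c_alpha2 P; p = c_p P; q = c_q P;
         f1 = c_f1 P; f2 = c_f2 P; f3 = c_f3 P; \<kappa> = c_kappa P; m = c_m P
     in ( \<Lambda> + \<omega> * m * Q - (lam * (1 - p) + \<phi> * p + \<mu>) * S,
          lam * (1 - p) * S - (q * \<upsilon> + \<mu>) * A,
          q * \<upsilon> * A - (\<delta>1 + \<mu>) * I,
          \<phi> * p * S + \<delta>1 * f1 * I + \<delta>2 * (1 - f2 - f3) * H - (\<omega> * m + \<mu>) * Q,
          \<delta>1 * (1 - f1) * I + \<eta> * (1 - \<kappa>) * HIC
            - (\<delta>2 * (1 - f2 - f3) + \<delta>2 * f2 + \<alpha>1 * f3 + \<mu>) * H,
          \<delta>2 * f2 * H - (\<eta> * (1 - \<kappa>) + \<alpha>2 * \<kappa> + \<mu>) * HIC))"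

definition R0 :: "covid_params \<Rightarrow> real" where
  "R0 P = (let \<mu> = c_mu P; \<beta> = c_beta P; lH = c_lH P; \<phi> = c_phi P; \<upsilon> = c_upsilon P;
         \<delta>1 = c_delta1 P; \<delta>2 = c_delta2 P; \<eta> = c_eta P; \<omega> = c_omega P;
         \<alpha>1 = c_alpha1 P; \<alpha>2 = c_alpha2 P; p = c_p P; q = c_q P;
         f1 = c_f1 P; f2 = c_f2 P; f3 = c_f3 P; \<kappa> = c_kappa P; m = c_m P;
         a0 = q * \<upsilon> + \<mu>; a1 = \<delta>1 + \<mu>; a2 = m * \<omega> + \<mu>;
         a3 = \<delta>2 * (1 - f2 - f3) + \<delta>2 * f2 + \<alpha>1 * f3 + \<mu>;
         a6 = \<delta>1 * (1 - f1); \<eta>\<kappa> = \<eta> * (1 - \<kappa>); a7 = \<alpha>2 * \<kappa> + \<eta>\<kappa> + \<mu>;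
         chi = a3 * a7 - \<delta>2 * \<eta>\<kappa> * f2
     in \<beta> * a2 * (1 - p) * ((lH * a6 * q * \<upsilon> + (a1 + q * \<upsilon>) * a3) * a7
                               - \<delta>2 * \<eta>\<kappa> * f2 * (q * \<upsilon> + a1))
        / (a0 * a1 * chi * (p * \<phi> + a2)))"

definition DFE :: "covid_params \<Rightarrow> state" where
  "DFE P = (let \<Lambda> = c_Lambda P; \<mu> = c_mu P; \<phi> = c_phi P; p = c_p P;
               a2 = c_m P * c_omega P + \<mu>
            in (\<Lambda> * a2 / ((p * \<phi> + a2) * \<mu>), 0, 0, p * \<phi> * \<Lambda> / ((p * \<phi> + a2) * \<mu>), 0, 0))"

definition is_solution_on :: "('a::real_normed_vector \<Rightarrow> 'a) \<Rightarrow> real set \<Rightarrow> (real \<Rightarrow> 'a) \<Rightarrow> bool" where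
  "is_solution_on F T x \<longleftrightarrow> (\<forall>t\<in>T. (x has_vector_derivative F (x t)) (at t within T))"

definition lyapunov_stable :: "('a::real_normed_vector \<Rightarrow> 'a) \<Rightarrow> 'a \<Rightarrow> bool" where
  "lyapunov_stable F e \<longleftrightarrow>
     (\<forall>\<epsilon>>0. \<exists>\<delta>>0. \<forall>T\<ge>0. \<forall>x. is_solution_on F {0..T} x \<and> dist (x 0) e < \<delta>
        \<longrightarrow> (\<forall>t\<in>{0..T}. dist (x t) e < \<epsilon>))"

definition locally_asymptotically_stable :: "('a::real_normed_vector \<Rightarrow> 'a) \<Rightarrow> 'a \<Rightarrow> bool" where
  "locally_asymptotically_stable F e \<longleftrightarrow>
     F e = 0 \<and> lyapunov_stable F e \<and>
     (\<exists>\<delta>>0. \<forall>x0. dist x0 e < \<delta> \<longrightarrow>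
        (\<exists>x. is_solution_on F {0..} x \<and> x 0 = x0) \<and>
        (\<forall>x. is_solution_on F {0..} x \<and> x 0 = x0 \<longrightarrow> (x \<longlongrightarrow> e) at_top))"

definition unstable_equilibrium :: "('a::real_normed_vector \<Rightarrow> 'a) \<Rightarrow> 'a \<Rightarrow> bool" where
  "unstable_equilibrium F e \<longleftrightarrow> F e = 0 \<and> \<not> lyapunov_stable F e"

end

theory Submission
  imports Defs "HOL-Real_Asymp.Real_Asymp"
begin

lemma exp_decay:
  fixes f :: "real \<Rightarrow> real"
  assumes ab: "a \<le> b" and fc: "continuous_on {a..b} f"
    and fd: "\<And>t. a < t \<Longrightarrow> t < b \<Longrightarrow> \<exists>d. (f has_real_derivative d) (at t) \<and> d \<le> k * f t"
  shows "f b \<le> f a * exp (k * (b - a))"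
proof -
  define g where "g t = f t * exp (-(k * t))" for t
  have "g b \<le> g a"
  proof (rule DERIV_nonpos_imp_decreasing_open[OF ab])
    fix t assume t: "a < t" "t < b"
    obtain d where d: "(f has_real_derivative d) (at t)" "d \<le> k * f t" using fd[OF t] by blast
    have "(g has_real_derivative (d * exp (-(k*t)) + f t * (exp (-(k*t)) * (-k)))) (at t)"
      unfolding g_def using d(1) by (auto intro!: derivative_eq_intros)
    moreover have "d * exp (-(k*t)) + f t * (exp (-(k*t)) * (-k)) = (d - k * f t) * exp (-(k*t))"
      by (simp add: algebra_simps)
    moreover have "(d - k * f t) * exp (-(k*t)) \<le> 0" using d(2) by (simp add: mult_nonpos_nonneg)
    ultimately show "\<exists>y. (g has_real_derivative y) (at t) \<and> y \<le> 0" by auto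
  next
    show "continuous_on {a..b} g" unfolding g_def by (intro continuous_intros fc)
  qed
  then have "f b * exp (-(k*b)) \<le> f a * exp (-(k*a))" unfolding g_def .
  then have "f b * exp (-(k*b)) * exp (k*b) \<le> f a * exp (-(k*a)) * exp (k*b)"
    by (rule mult_right_mono) simp
  then show ?thesis by (simp add: mult.assoc exp_add[symmetric] algebra_simps)
qed

lemma exp_growth:
  fixes f :: "real \<Rightarrow> real"
  assumes ab: "a \<le> b" and fc: "continuous_on {a..b} f"
    and fd: "\<And>t. a < t \<Longrightarrow> t < b \<Longrightarrow> \<exists>d. (f has_real_derivative d) (at t) \<and> d \<ge> k * f t"
  shows "f b \<ge> f a * exp (k * (b - a))"
proof -
  have "(\<lambda>t. - f t) b \<le> (\<lambda>t. - f t) a * exp (k * (b - a))"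
  proof (rule exp_decay[OF ab])
    show "continuous_on {a..b} (\<lambda>t. - f t)" by (intro continuous_intros fc)
    fix t assume t: "a < t" "t < b"
    obtain d where d: "(f has_real_derivative d) (at t)" "d \<ge> k * f t" using fd[OF t] by blast
    have "((\<lambda>t. - f t) has_real_derivative -d) (at t)" using d(1) by (auto intro!: derivative_eq_intros)
    then show "\<exists>d. ((\<lambda>t. - f t) has_real_derivative d) (at t) \<and> d \<le> k * (- f t)" using d(2) by auto
  qed
  then show ?thesis by simp
qed

lemma first_hit:
  fixes f :: "real \<Rightarrow> real"
  assumes ab: "a \<le> b" and fc: "continuous_on {a..b} f" and fa: "f a < c" and fb: "c \<le> f b"
  shows "\<exists>\<tau>\<in>{a..b}. f \<tau> = c \<and> (\<forall>s\<in>{a..<\<tau>}. f s < c) \<and> a < \<tau>"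
proof -
  define S where "S = {a..b} \<inter> f -` {c..}"
  have Scl: "closed S" unfolding S_def by (rule continuous_closed_preimage[OF fc]) auto
  have bS: "b \<in> S" unfolding S_def using ab fb by auto
  have bdd: "bdd_below S" unfolding S_def by (rule bdd_belowI[of _ a]) auto
  define \<tau> where "\<tau> = Inf S"
  have tS: "\<tau> \<in> S" unfolding \<tau>_def using closed_contains_Inf[OF _ bdd Scl] bS by auto
  have tab: "\<tau> \<in> {a..b}" and ft: "c \<le> f \<tau>" using tS unfolding S_def by auto
  have below: "f s < c" if s: "s \<in> {a..<\<tau>}" for s
  proof (rule ccontr)
    assume "\<not> f s < c"
    then have "s \<in> S" unfolding S_def using s tab by auto
    then have "\<tau> \<le> s" unfolding \<tau>_def by (rule cInf_lower[OF _ bdd])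
    then show False using s by auto
  qed
  have at: "a < \<tau>" using tab fa ft by (cases "a = \<tau>") auto
  have "\<tau> \<in> {a..\<tau>} \<inter> f -` {..c}"
  proof -
    have cl: "closed ({a..\<tau>} \<inter> f -` {..c})"
      by (rule continuous_closed_preimage[OF continuous_on_subset[OF fc]]) (use tab in auto)
    have "{a..<\<tau>} \<subseteq> {a..\<tau>} \<inter> f -` {..c}" using below by (auto simp: less_imp_le)
    then have "closure {a..<\<tau>} \<subseteq> {a..\<tau>} \<inter> f -` {..c}" by (rule closure_minimal[OF _ cl])
    moreover have "\<tau> \<in> closure {a..<\<tau>}" using at by simp
    ultimately show ?thesis by (rule subsetD)
  qed
  then have "f \<tau> \<le> c" by auto
  then show ?thesis using tab ft below at by (intro bexI[of _ \<tau>]) auto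
qed

lemma solution_continuous:
  assumes "is_solution_on F {0..T} x"
  shows "continuous_on {0..T} x"
  using assms unfolding is_solution_on_def
  by (auto simp: continuous_on_eq_continuous_within intro: has_vector_derivative_continuous)

lemma solution_interior:
  assumes "is_solution_on F {0..T} x" "0 < t" "t < T"
  shows "(x has_vector_derivative F (x t)) (at t)"
proof -
  have "(x has_vector_derivative F (x t)) (at t within {0..T})"
    using assms unfolding is_solution_on_def by auto
  moreover have "at t within {0..T} = at t" using assms by (intro at_within_interior) auto
  ultimately show ?thesis by simp
qed

lemma lyap_decay:
  fixes F :: "'a::real_normed_vector \<Rightarrow> 'a" and V :: "'a \<Rightarrow> real" and dV :: "'a \<Rightarrow> 'a \<Rightarrow> real"
  assumes k1: "k1 > 0" and Vlow: "\<And>X. k1 * (dist X e)^2 \<le> V X"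
    and Vc: "continuous_on UNIV V"
    and Vd: "\<And>x t Y. (x has_vector_derivative Y) (at t) \<Longrightarrow> ((\<lambda>t. V (x t)) has_real_derivative dV (x t) Y) (at t)"
    and dec: "\<And>X. dist X e < \<rho> \<Longrightarrow> dV X (F X) \<le> -\<alpha> * V X" and al: "\<alpha> \<ge> 0" and rho: "\<rho> > 0"
    and sol: "is_solution_on F {0..T} x" and start: "V (x 0) < k1 * \<rho>^2"
  shows "\<forall>t\<in>{0..T}. V (x t) \<le> V (x 0) * exp (-\<alpha> * t)"
proof -
  have xc: "continuous_on {0..T} x" by (rule solution_continuous[OF sol])
  have fc: "continuous_on {0..T} (\<lambda>t. V (x t))" by (rule continuous_on_compose2[OF Vc xc]) auto
  have inball: "dist X e < \<rho>" if "V X < k1 * \<rho>^2" for X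
  proof -
    have "k1 * (dist X e)^2 < k1 * \<rho>^2" using Vlow[of X] that by linarith
    then have "(dist X e)^2 < \<rho>^2" using k1 by simp
    then show ?thesis using rho by (simp add: power_less_imp_less_base)
  qed
  have V0: "V X \<ge> 0" for X using Vlow[of X] k1 by (smt (verit) mult_nonneg_nonneg zero_le_power2)
  have decay: "V (x t) \<le> V (x 0) * exp (-\<alpha> * t)"
    if t: "0 \<le> t" "t \<le> T" and small: "\<forall>s\<in>{0..<t}. V (x s) < k1 * \<rho>^2" for t
  proof -
    have "V (x t) \<le> V (x 0) * exp (-\<alpha> * (t - 0))"
    proof (rule exp_decay[OF t(1)])
      show "continuous_on {0..t} (\<lambda>t. V (x t))" by (rule continuous_on_subset[OF fc]) (use t in auto)
      fix s assume s: "0 < s" "s < t"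
      have "(x has_vector_derivative F (x s)) (at s)" by (rule solution_interior[OF sol]) (use s t in auto)
      then have "((\<lambda>t. V (x t)) has_real_derivative dV (x s) (F (x s))) (at s)" by (rule Vd)
      moreover have "dV (x s) (F (x s)) \<le> -\<alpha> * V (x s)" using small s by (intro dec inball) auto
      ultimately show "\<exists>d. ((\<lambda>t. V (x t)) has_real_derivative d) (at s) \<and> d \<le> -\<alpha> * V (x s)" by blast
    qed
    then show ?thesis by simp
  qed
  have small: "V (x t) < k1 * \<rho>^2" if t: "t \<in> {0..T}" for t
  proof (rule ccontr)
    assume "\<not> V (x t) < k1 * \<rho>^2"
    then have "k1 * \<rho>^2 \<le> V (x t)" by simp
    then have "\<exists>\<tau>\<in>{0..t}. V (x \<tau>) = k1 * \<rho>^2 \<and> (\<forall>s\<in>{0..<\<tau>}. V (x s) < k1 * \<rho>^2) \<and> 0 < \<tau>"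
      using t start by (intro first_hit continuous_on_subset[OF fc]) auto
    then obtain \<tau> where \<tau>: "\<tau> \<in> {0..t}" "V (x \<tau>) = k1 * \<rho>^2" "\<forall>s\<in>{0..<\<tau>}. V (x s) < k1 * \<rho>^2"
      by blast
    have "V (x \<tau>) \<le> V (x 0) * exp (-\<alpha> * \<tau>)" using \<tau> t by (intro decay) auto
    also have "\<dots> \<le> V (x 0) * 1" using \<tau> al V0 by (intro mult_left_mono) auto
    finally show False using \<tau> start by simp
  qed
  show ?thesis using decay small by auto
qed

lemma cont_integral_max0:
  fixes g :: "real \<Rightarrow> 'a::banach"
  assumes g: "continuous_on UNIV g"
  shows "continuous_on UNIV (\<lambda>t. integral {0..max 0 t} g)"
proof -
  have h: "continuous_on {0..} (\<lambda>u. integral {0..u} g)"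
  proof (rule continuous_on_eq_continuous_within[THEN iffD2], intro ballI)
    fix t :: real assume t: "t \<in> {0..}"
    have "((\<lambda>u. integral {0..u} g) has_vector_derivative g t) (at t within {0..t+1})"
      using t by (intro integral_has_vector_derivative continuous_on_subset[OF g]) auto
    then have "continuous (at t within {0..t+1}) (\<lambda>u. integral {0..u} g)"
      by (rule has_vector_derivative_continuous)
    moreover have "at t within {0..t+1} = at t within {0..}"
      by (rule at_within_nhd[where S="{..<t+1}"]) auto
    ultimately show "continuous (at t within {0..}) (\<lambda>u. integral {0..u} g)" by simp
  qed
  have "continuous_on UNIV ((\<lambda>u. integral {0..u} g) \<circ> (\<lambda>t. max 0 t))"
    by (rule continuous_on_compose) (auto intro!: continuous_intros continuous_on_subset[OF h])
  then show ?thesis by (simp add: o_def)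
qed

lemma exp_integral:
  fixes L :: real assumes "L > 0" "0 \<le> t"
  shows "integral {0..t} (\<lambda>s. exp (2*L* s)) = (exp (2*L*t) - 1) / (2*L)"
proof -
  have "((\<lambda>s. exp (2*L* s)) has_integral ((\<lambda>s. exp (2*L* s)/(2*L)) t - (\<lambda>s. exp (2*L* s)/(2*L)) 0)) {0..t}"
    using assms
    by (intro fundamental_theorem_of_calculus)
       (auto intro!: derivative_eq_intros simp: has_real_derivative_iff_has_vector_derivative[symmetric])
  then show ?thesis using assms by (simp add: integral_unique diff_divide_distrib)
qed

lemma picard_exists:
  fixes G :: "'a::banach \<Rightarrow> 'a"
  assumes lip: "\<And>x y. norm (G x - G y) \<le> L * norm (x - y)" and L: "L > 0"
    and bnd: "\<And>x. norm (G x) \<le> B"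
  shows "\<exists>x. x 0 = x0 \<and> (\<forall>t\<ge>0. (x has_vector_derivative G (x t)) (at t within {0..}))"
proof -
  have Gc: "continuous_on UNIV G"
    by (rule lipschitz_on_continuous_on[of L]) (use L lip in \<open>auto simp: lipschitz_on_def dist_norm\<close>)
  define \<Psi> where "\<Psi> f t = exp (-(2*L*max 0 t)) *\<^sub>R (x0 + integral {0..max 0 t} (\<lambda>s. G (exp (2*L* s) *\<^sub>R f s)))"
    for f :: "real \<Rightarrow> 'a" and t
  have B0: "B \<ge> 0" using bnd[of 0] norm_ge_zero order_trans by blast
  have inb: "\<Psi> f \<in> bcontfun" if fc: "continuous_on UNIV f" for f
  proof (rule bcontfun_normI)
    have gc: "continuous_on UNIV (\<lambda>s. G (exp (2*L* s) *\<^sub>R f s))"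
      by (rule continuous_on_compose2[OF Gc]) (auto intro!: continuous_intros fc)
    show "continuous_on UNIV (\<Psi> f)"
      unfolding \<Psi>_def by (intro continuous_intros cont_integral_max0 gc)
    fix t :: real
    define \<tau> where "\<tau> = max 0 t"
    have \<tau>0: "\<tau> \<ge> 0" unfolding \<tau>_def by simp
    have "norm (integral {0..\<tau>} (\<lambda>s. G (exp (2 * L * s) *\<^sub>R f s))) \<le> B * (\<tau> - 0)"
      by (rule integral_bound) (auto intro: continuous_on_subset[OF gc] bnd \<tau>0)
    then have n1: "norm (x0 + integral {0..\<tau>} (\<lambda>s. G (exp (2 * L * s) *\<^sub>R f s))) \<le> norm x0 + B * \<tau>"
      by (smt (verit) norm_triangle_ineq)
    have e1: "exp (-(2*L*\<tau>)) \<le> 1" using L \<tau>0 by simp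
    have e2: "exp (-(2*L*\<tau>)) * \<tau> \<le> 1/(2*L)"
    proof -
      have "1 + 2*L*\<tau> \<le> exp (2*L*\<tau>)" by (rule exp_ge_add_one_self)
      then have "2*L*\<tau> \<le> exp (2*L*\<tau>)" by linarith
      then have "\<tau> \<le> exp (2*L*\<tau>) / (2*L)" using L by (simp add: field_simps)
      then show ?thesis using L by (simp add: exp_minus field_simps)
    qed
    have "norm (\<Psi> f t) = exp (-(2*L*\<tau>)) * norm (x0 + integral {0..\<tau>} (\<lambda>s. G (exp (2 * L * s) *\<^sub>R f s)))"
      unfolding \<Psi>_def \<tau>_def[symmetric] by simp
    also have "\<dots> \<le> exp (-(2*L*\<tau>)) * (norm x0 + B * \<tau>)"
      by (rule mult_left_mono[OF n1]) simp
    also have "\<dots> = exp (-(2*L*\<tau>)) * norm x0 + B * (exp (-(2*L*\<tau>)) * \<tau>)"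
      by (simp add: algebra_simps)
    also have "\<dots> \<le> 1 * norm x0 + B * (1/(2*L))"
      by (intro add_mono mult_right_mono mult_left_mono e1 e2 B0) simp_all
    finally have "norm (\<Psi> f t) \<le> 1 * norm x0 + B * (1/(2*L))" .
    then show "norm (\<Psi> f t) \<le> norm x0 + B / (2*L)" by simp
  qed
  define \<Phi> where "\<Phi> y = Bcontfun (\<Psi> (apply_bcontfun y))" for y :: "real \<Rightarrow>\<^sub>C 'a"
  have \<Phi>app: "apply_bcontfun (\<Phi> y) = \<Psi> (apply_bcontfun y)" for y
    unfolding \<Phi>_def by (rule Bcontfun_inverse[OF inb]) simp
  have contr: "dist (\<Phi> y) (\<Phi> z) \<le> (1/2) * dist y z" for y z
  proof (rule dist_bound)
    fix t :: real
    let ?t = "max 0 t"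
    let ?D = "dist y z"
    let ?gy = "\<lambda>s. G (exp (2*L* s) *\<^sub>R apply_bcontfun y s)"
    let ?gz = "\<lambda>s. G (exp (2*L* s) *\<^sub>R apply_bcontfun z s)"
    have gyc: "continuous_on UNIV ?gy" "continuous_on UNIV ?gz"
      by (rule continuous_on_compose2[OF Gc]; auto intro!: continuous_intros)+
    have iy: "?gy integrable_on {0..?t}" "?gz integrable_on {0..?t}"
      by (auto intro!: integrable_continuous_interval continuous_on_subset[OF gyc(1)] continuous_on_subset[OF gyc(2)])
    have "norm (integral {0..?t} (\<lambda>s. ?gy s - ?gz s)) \<le> integral {0..?t} (\<lambda>s. L * ?D * exp (2*L* s))"
    proof (rule integral_norm_bound_integral)
      show "(\<lambda>s. ?gy s - ?gz s) integrable_on {0..?t}" using iy by (rule integrable_diff)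
      show "(\<lambda>s. L * ?D * exp (2*L* s)) integrable_on {0..?t}"
        by (auto intro!: integrable_continuous_interval continuous_intros)
      fix s assume "s \<in> {0..?t}"
      have "norm (?gy s - ?gz s) \<le> L * norm (exp (2*L* s) *\<^sub>R apply_bcontfun y s - exp (2*L* s) *\<^sub>R apply_bcontfun z s)"
        by (rule lip)
      also have "\<dots> = L * exp (2*L* s) * dist (apply_bcontfun y s) (apply_bcontfun z s)"
        by (simp add: dist_norm scaleR_diff_right[symmetric])
      also have "\<dots> \<le> L * exp (2*L* s) * ?D"
        using L by (intro mult_left_mono dist_bounded) auto
      finally show "norm (?gy s - ?gz s) \<le> L * ?D * exp (2*L* s)" by (simp add: mult_ac)
    qed
    also have "\<dots> = L * ?D * ((exp (2*L*?t) - 1) / (2*L))"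
      using L exp_integral[OF L, of ?t] by simp
    finally have I: "norm (integral {0..?t} ?gy - integral {0..?t} ?gz) \<le> L * ?D * ((exp (2*L*?t) - 1) / (2*L))"
      by (simp add: integral_diff[OF iy])
    have "dist (\<Phi> y t) (\<Phi> z t) = exp (-(2*L*?t)) * norm (integral {0..?t} ?gy - integral {0..?t} ?gz)"
      unfolding \<Phi>app \<Psi>_def dist_norm by (simp add: scaleR_diff_right[symmetric])
    also have "\<dots> \<le> exp (-(2*L*?t)) * (L * ?D * ((exp (2*L*?t) - 1) / (2*L)))"
      by (rule mult_left_mono[OF I]) simp
    also have "\<dots> = ?D/2 * (1 - exp (-(2*L*?t)))"
      using L by (simp add: field_simps exp_minus)
    also have "\<dots> \<le> ?D/2"
      using L by (intro mult_right_le_one_le) (auto intro: zero_le_dist)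
    finally show "dist (\<Phi> y t) (\<Phi> z t) \<le> (1/2) * ?D" by simp
  qed
  obtain y where fy: "\<Phi> y = y"
    using banach_fix_type[of "1/2" \<Phi>] contr by auto
  define x where "x t = exp (2*L*t) *\<^sub>R apply_bcontfun y t" for t
  have xc: "continuous_on UNIV x" unfolding x_def by (auto intro!: continuous_intros)
  have xeq: "x t = x0 + integral {0..t} (\<lambda>s. G (x s))" if t: "t \<ge> 0" for t
  proof -
    have "apply_bcontfun y t = \<Psi> (apply_bcontfun y) t" using fy \<Phi>app by metis
    then have "x t = exp (2*L*t) *\<^sub>R (exp (-(2*L*t)) *\<^sub>R (x0 + integral {0..t} (\<lambda>s. G (x s))))"
      unfolding x_def \<Psi>_def using t by simp
    then show ?thesis by (simp add: exp_minus)
  qed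
  have Gxc: "continuous_on UNIV (\<lambda>s. G (x s))" by (rule continuous_on_compose2[OF Gc xc]) auto
  show ?thesis
  proof (intro exI conjI allI impI)
    show "x 0 = x0" using xeq[of 0] by simp
    fix t :: real assume t: "t \<ge> 0"
    have "((\<lambda>u. x0 + integral {0..u} (\<lambda>s. G (x s))) has_vector_derivative G (x t)) (at t within {0..t+1})"
      using t by (auto intro!: derivative_eq_intros integral_has_vector_derivative continuous_on_subset[OF Gxc])
    moreover have "at t within {0..t+1} = at t within {0..}"
      by (rule at_within_nhd[where S="{..<t+1}"]) auto
    ultimately have d: "((\<lambda>u. x0 + integral {0..u} (\<lambda>s. G (x s))) has_vector_derivative G (x t)) (at t within {0..})"
      by simp
    show "(x has_vector_derivative G (x t)) (at t within {0..})"
      by (rule has_vector_derivative_transform_within[OF d zero_less_one]) (use t xeq in auto)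
  qed
qed

lemma amgm_w:
  fixes k vi vj yi yj :: real
  assumes "k \<ge> 0" "vi > 0" "vj > 0"
  shows "k * yi * yj \<le> k * (vj/(2* vi)) * yi^2 + k * (vi/(2* vj)) * yj^2"
proof -
  have "0 \<le> (vj* yi - vi* yj)^2" by simp
  then have "2* vi* vj* (yi* yj) \<le> vj^2* yi^2 + vi^2* yj^2" by (simp add: power2_eq_square algebra_simps)
  then have "yi* yj \<le> (vj/(2* vi)) * yi^2 + (vi/(2* vj)) * yj^2"
    using assms by (simp add: field_simps power2_eq_square) 
  then have "k* (yi* yj) \<le> k* ((vj/(2* vi)) * yi^2 + (vi/(2* vj)) * yj^2)"
    using assms(1) by (simp add: mult_left_mono)
  then show ?thesis by (simp add: algebra_simps)
qed

lemma quad_metzler4: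
  fixes c0 a0 a1 a3 a6 ek a7 qv lH b :: real
  assumes pos: "c0 \<ge> 0" "a0 > 0" "a1 > 0" "a3 > 0" "a6 \<ge> 0" "ek \<ge> 0" "a7 > 0" "qv \<ge> 0" "lH \<ge> 0" "b \<ge> 0"
    and chi: "a3* a7 - b* ek > 0"
    and R: "c0* (1 + qv/a1 + lH* a6* qv* a7/(a1* (a3* a7 - b* ek))) < a0"
  shows "\<exists>dA dI dH dC \<sigma>. dA > 0 \<and> dI > 0 \<and> dH > 0 \<and> dC > 0 \<and> \<sigma> > 0 \<and>
     (\<forall>A I H C. dA* A* (c0* (A + I + lH* H) - a0* A) + dI* I* (qv* A - a1* I) + dH* H* (a6* I + ek* C - a3* H)
        + dC* C* (b* H - a7* C) \<le> -\<sigma>* (A^2 + I^2 + H^2 + C^2))"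
proof -
  define chi where "chi = a3* a7 - b* ek"
  have chi0: "chi > 0" using chi chi_def by simp
  define r where "r = c0* (1 + qv/a1 + lH* a6* qv* a7/(a1* chi)) - a0"
  have r0: "r < 0" using R unfolding r_def chi_def by simp
  define kv where "kv = c0/a1 + c0* lH* (a6* a7/a1 + a7 + ek)/chi"
  define kw where "kw = (qv/a1)* (1 + a6* (a7 + b)/chi)"
  have kv0: "kv \<ge> 0" unfolding kv_def using pos chi0 by (intro add_nonneg_nonneg divide_nonneg_pos mult_nonneg_nonneg) auto
  have kw0: "kw \<ge> 0" unfolding kw_def using pos chi0 by (intro mult_nonneg_nonneg add_nonneg_nonneg divide_nonneg_pos) auto
  define \<epsilon> where "\<epsilon> = -r/(2* (1+kv+kw))"
  have e0: "\<epsilon> > 0" unfolding \<epsilon>_def using r0 kv0 kw0 by (intro divide_pos_pos) auto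
  have ee: "\<epsilon>*(1+kv+kw) = -r/2" unfolding \<epsilon>_def using kv0 kw0 by (simp add: field_simps)
  then have ee2: "\<epsilon> + \<epsilon>*kv + \<epsilon>*kw = -r/2" by (simp add: algebra_simps)
  have "\<epsilon>*kv \<ge> 0" "\<epsilon>*kw \<ge> 0" using e0 kv0 kw0 by simp_all
  then have ek1: "\<epsilon>*kv \<le> -r/2" "\<epsilon>*kw \<le> -r/2" using ee2 e0 by linarith+
  define vI where "vI = (qv+\<epsilon>)/a1"
  define vH where "vH = (a6* vI* a7 + \<epsilon>* a7 + ek* \<epsilon>)/chi"
  define vC where "vC = (b* vH + \<epsilon>)/a7"
  define wH where "wH = (c0* lH* a7 + \<epsilon>* a7 + b* \<epsilon>)/chi"
  define wC where "wC = (ek* wH + \<epsilon>)/a7"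
  define wI where "wI = (c0 + a6* wH + \<epsilon>)/a1"
  have vI0: "vI > 0" unfolding vI_def using pos e0 by simp
  have vH0: "vH > 0" unfolding vH_def using pos e0 chi0 vI0
    by (intro divide_pos_pos add_nonneg_pos add_pos_nonneg) auto
  have vC0: "vC > 0" unfolding vC_def using pos e0 vH0 by (intro divide_pos_pos add_nonneg_pos) auto
  have wH0: "wH > 0" unfolding wH_def using pos e0 chi0
    by (intro divide_pos_pos add_nonneg_pos add_pos_nonneg) auto
  have wC0: "wC > 0" unfolding wC_def using pos e0 wH0 by (intro divide_pos_pos add_nonneg_pos) auto
  have wI0: "wI > 0" unfolding wI_def using pos e0 wH0 by (intro divide_pos_pos add_nonneg_pos) auto
  have rowA: "(c0-a0) + c0* vI + c0* lH* vH = r + \<epsilon>* kv"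
    unfolding r_def kv_def vH_def vI_def using pos chi0 by (simp add: field_simps)
  have rowI: "qv - a1* vI = -\<epsilon>" unfolding vI_def using pos by (simp add: field_simps)
  have hvH: "vH* chi = a6* vI* a7 + \<epsilon>* a7 + ek*\<epsilon>" unfolding vH_def using chi0 by simp
  have hvC: "vC* a7 = b* vH + \<epsilon>" unfolding vC_def using pos by simp
  have "a7*(a6* vI - a3* vH + ek* vC) = a7*(-\<epsilon>)" using hvH hvC chi_def by algebra
  then have rowH: "a6* vI - a3* vH + ek* vC = -\<epsilon>" using pos(7) by (metis mult_cancel_left less_irrefl)
  have rowC: "b* vH - a7* vC = -\<epsilon>" unfolding vC_def using pos by (simp add: field_simps)
  have colA: "(c0-a0) + qv* wI = r + \<epsilon>* kw"
    unfolding r_def kw_def wI_def wH_def using pos chi0 by (simp add: field_simps)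
  have colI: "c0 - a1* wI + a6* wH = -\<epsilon>" unfolding wI_def using pos by (simp add: field_simps)
  have hwH: "wH* chi = c0* lH* a7 + \<epsilon>* a7 + b*\<epsilon>" unfolding wH_def using chi0 by simp
  have hwC: "wC* a7 = ek* wH + \<epsilon>" unfolding wC_def using pos by simp
  have "a7*(c0* lH - a3* wH + b* wC) = a7*(-\<epsilon>)" using hwH hwC chi_def by algebra
  then have colH: "c0* lH - a3* wH + b* wC = -\<epsilon>" using pos(7) by (metis mult_cancel_left less_irrefl)
  have colC: "ek* wH - a7* wC = -\<epsilon>" unfolding wC_def using pos by (simp add: field_simps)
  define dI where "dI = wI/vI"
  define dH where "dH = wH/vH"
  define dC where "dC = wC/vC"
  define cA where "cA = (c0 - a0) + c0* vI/2 + c0* lH* vH/2 + dI* qv* vI/2"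
  define cI where "cI = -dI* a1 + c0/(2* vI) + dI* qv/(2* vI) + dH* a6* vH/(2* vI)"
  define cH where "cH = -dH* a3 + c0* lH/(2* vH) + dH* a6* vI/(2* vH) + dH* ek* vC/(2* vH) + dC* b* vC/(2* vH)"
  define cC where "cC = -dC* a7 + dH* ek* vH/(2* vC) + dC* b* vH/(2* vC)"
  have dI0: "dI > 0" "dH > 0" "dC > 0" unfolding dI_def dH_def dC_def using vI0 vH0 vC0 wI0 wH0 wC0 by auto
  have "2* cA = ((c0-a0) + c0* vI + c0* lH* vH) + ((c0-a0) + qv* wI)"
    unfolding cA_def dI_def using vI0 by (simp add: field_simps)
  then have cA: "cA < 0" using rowA colA ek1 r0 by linarith
  have "2* vI* cI = dI* (qv - a1* vI) + (c0 - a1* wI + a6* wH)"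
    unfolding cI_def dI_def dH_def using vI0 vH0 by (simp add: field_simps)
  then have "2* vI* cI < 0" using rowI colI e0 mult_pos_pos[OF dI0(1) e0] by simp
  then have cI: "cI < 0" using vI0 by (simp add: mult_less_0_iff)
  have "2* vH* cH = dH* (a6* vI - a3* vH + ek* vC) + (c0* lH - a3* wH + b* wC)"
    unfolding cH_def dH_def dC_def using vH0 vC0 by (simp add: field_simps)
  then have "2* vH* cH < 0" using rowH colH e0 mult_pos_pos[OF dI0(2) e0] by simp
  then have cH: "cH < 0" using vH0 by (simp add: mult_less_0_iff)
  have "2* vC* cC = dC* (b* vH - a7* vC) + (ek* wH - a7* wC)"
    unfolding cC_def dH_def dC_def using vH0 vC0 by (simp add: field_simps)
  then have "2* vC* cC < 0" using rowC colC e0 mult_pos_pos[OF dI0(3) e0] by simp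
  then have cC: "cC < 0" using vC0 by (simp add: mult_less_0_iff)
  define \<sigma> where "\<sigma> = min (min (-cA) (-cI)) (min (-cH) (-cC))"
  have s0: "\<sigma> > 0" unfolding \<sigma>_def using cA cI cH cC by simp
  show ?thesis
  proof (intro exI conjI allI)
    show "(1::real) > 0" by simp
    show "dI > 0" "dH > 0" "dC > 0" "\<sigma> > 0" using dI0 s0 by auto
    fix A I H C :: real
    have t1: "c0 * A * I \<le> c0* (vI/(2*1))* A^2 + c0* (1/(2* vI))* I^2"
      by (rule amgm_w) (use pos vI0 in auto)
    have t2: "(c0* lH) * A * H \<le> (c0* lH)* (vH/(2*1))* A^2 + (c0* lH)* (1/(2* vH))* H^2"
      by (rule amgm_w) (use pos vH0 in auto)
    have t3: "(dI* qv) * I * A \<le> (dI* qv)* (1/(2* vI))* I^2 + (dI* qv)* (vI/(2*1))* A^2"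
      by (rule amgm_w) (use pos vI0 dI0 in auto)
    have t4: "(dH* a6) * H * I \<le> (dH* a6)* (vI/(2* vH))* H^2 + (dH* a6)* (vH/(2* vI))* I^2"
      by (rule amgm_w) (use pos vI0 vH0 dI0 in auto)
    have t5: "(dH* ek) * H * C \<le> (dH* ek)* (vC/(2* vH))* H^2 + (dH* ek)* (vH/(2* vC))* C^2"
      by (rule amgm_w) (use pos vC0 vH0 dI0 in auto)
    have t6: "(dC* b) * C * H \<le> (dC* b)* (vH/(2* vC))* C^2 + (dC* b)* (vC/(2* vH))* H^2"
      by (rule amgm_w) (use pos vC0 vH0 dI0 in auto)
    have eq: "1* A* (c0* (A + I + lH* H) - a0* A) + dI* I* (qv* A - a1* I) + dH* H* (a6* I + ek* C - a3* H)
        + dC* C* (b* H - a7* C) = (c0-a0)* A^2 - dI* a1* I^2 - dH* a3* H^2 - dC* a7* C^2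
        + c0* A* I + (c0* lH)* A* H + (dI* qv)* I* A + (dH* a6)* H* I + (dH* ek)* H* C + (dC* b)* C* H"
      by (simp add: algebra_simps power2_eq_square)
    have eq2: "(c0-a0)* A^2 - dI* a1* I^2 - dH* a3* H^2 - dC* a7* C^2
        + (c0* (vI/(2*1))* A^2 + c0* (1/(2* vI))* I^2) + ((c0* lH)* (vH/(2*1))* A^2 + (c0* lH)* (1/(2* vH))* H^2)
        + ((dI* qv)* (1/(2* vI))* I^2 + (dI* qv)* (vI/(2*1))* A^2) + ((dH* a6)* (vI/(2* vH))* H^2 + (dH* a6)* (vH/(2* vI))* I^2)
        + ((dH* ek)* (vC/(2* vH))* H^2 + (dH* ek)* (vH/(2* vC))* C^2) + ((dC* b)* (vH/(2* vC))* C^2 + (dC* b)* (vC/(2* vH))* H^2)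
        = cA* A^2 + cI* I^2 + cH* H^2 + cC* C^2"
      unfolding cA_def cI_def cH_def cC_def by (simp add: algebra_simps)
    have "cA* A^2 + cI* I^2 + cH* H^2 + cC* C^2 \<le> -\<sigma>* A^2 + -\<sigma>* I^2 + -\<sigma>* H^2 + -\<sigma>* C^2"
      by (intro add_mono mult_right_mono) (auto simp: \<sigma>_def)
    then show "1* A* (c0* (A + I + lH* H) - a0* A) + dI* I* (qv* A - a1* I) + dH* H* (a6* I + ek* C - a3* H)
        + dC* C* (b* H - a7* C) \<le> -\<sigma>* (A^2 + I^2 + H^2 + C^2)"
      using eq eq2 t1 t2 t3 t4 t5 t6 by (simp add: algebra_simps)
  qed
qed

lemma sq3: "((x::real) + y + z)^2 \<le> 3* (x^2 + y^2 + z^2)"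
proof -
  have "0 \<le> (x-y)^2 + (y-z)^2 + (x-z)^2" by simp
  then show ?thesis by (simp add: power2_eq_square algebra_simps)
qed

lemma young: "2* (a::real)* b \<le> e* a^2 + b^2/e" if "e > 0" for e
proof -
  have "0 \<le> (e* a - b)^2/e" using that by simp
  also have "\<dots> = e* a^2 - 2* a* b + b^2/e" using that by (simp add: power2_eq_square field_simps)
  finally show ?thesis by simp
qed

lemma abs3: "\<bar>(x::real) + y + z\<bar> \<le> \<bar>x\<bar> + \<bar>y\<bar> + \<bar>z\<bar>" by arith

lemma absprod: "\<bar>a\<bar> * \<bar>b\<bar> \<le> a^2 + (b::real)^2"
proof -
  have "0 \<le> (\<bar>a\<bar> - \<bar>b\<bar>)^2" by simp
  then have "2* (\<bar>a\<bar>* \<bar>b\<bar>) \<le> \<bar>a\<bar>^2 + \<bar>b\<bar>^2" by (simp add: power2_eq_square algebra_simps)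
  then have x: "2* (\<bar>a\<bar>* \<bar>b\<bar>) \<le> a^2 + b^2" by simp
  have y: "0 \<le> \<bar>a\<bar>* \<bar>b\<bar>" by simp
  from x y show ?thesis by linarith
qed

lemma lin3_bound:
  fixes k1 k2 k3 x1 x2 x3 M :: real
  assumes "\<bar>k1\<bar> \<le> M" "\<bar>k2\<bar> \<le> M" "\<bar>k3\<bar> \<le> M"
  shows "(k1* x1 + k2* x2 + k3* x3)^2 \<le> 3* M^2* (x1^2 + x2^2 + x3^2)"
proof -
  have M0: "M \<ge> 0" using assms(1) by linarith
  have "\<bar>k1* x1 + k2* x2 + k3* x3\<bar> \<le> \<bar>k1* x1\<bar> + \<bar>k2* x2\<bar> + \<bar>k3* x3\<bar>" by (rule abs3)
  also have "\<dots> \<le> M* \<bar>x1\<bar> + M* \<bar>x2\<bar> + M* \<bar>x3\<bar>"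
    unfolding abs_mult using assms by (intro add_mono mult_right_mono) auto
  finally have "\<bar>k1* x1 + k2* x2 + k3* x3\<bar>^2 \<le> (M* \<bar>x1\<bar> + M* \<bar>x2\<bar> + M* \<bar>x3\<bar>)^2"
    by (rule power_mono) simp
  also have "\<dots> \<le> 3* ((M* \<bar>x1\<bar>)^2 + (M* \<bar>x2\<bar>)^2 + (M* \<bar>x3\<bar>)^2)" by (rule sq3)
  also have "\<dots> = 3* M^2* (x1^2 + x2^2 + x3^2)" by (simp add: power_mult_distrib algebra_simps)
  finally show ?thesis by simp
qed

lemma lyap_ineq:
  fixes dA dI dH dC \<sigma> c0 a0 a1 a3 a6 ek a7 qv lh b mu pp a2 e1 e2 :: real
  assumes d: "dA > 0" "dI > 0" "dH > 0" "dC > 0" "\<sigma> > 0"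
    and par: "lh \<ge> 0" "mu > 0" "pp \<ge> 0" "a2 > 0" "e1 \<ge> 0" "e2 \<ge> 0" "c0 \<ge> 0"
    and quad: "\<And>A I H C. dA* A* (c0* (A + I + lh* H) - a0* A) + dI* I* (qv* A - a1* I) + dH* H* (a6* I + ek* C - a3* H)
        + dC* C* (b* H - a7* C) \<le> -\<sigma>* (A^2 + I^2 + H^2 + C^2)"
  shows "\<exists>\<theta>>0. \<exists>\<gamma>>0. \<exists>\<alpha>>0. \<forall>A I H C u z cc. \<bar>cc - c0\<bar> \<le> \<theta> \<longrightarrow>
      2* (dA* A* (cc* (A + I + lh* H) - a0* A) + dI* I* (qv* A - a1* I) + dH* H* (a6* I + ek* C - a3* H)
        + dC* C* (b* H - a7* C))
      + \<gamma>* (2* u* (-mu* u - cc* (A + I + lh* H) + e1* I + e2* H)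
          + 2* (mu/(pp+mu))* z* (pp* (u - z) - a2* z + e1* I + e2* H))
      \<le> -\<alpha>* (dA* A^2 + dI* I^2 + dH* H^2 + dC* C^2 + \<gamma>* (u^2 + (mu/(pp+mu))* z^2))"
proof -
  define D where "D = dA* (2+lh)"
  have D0: "D > 0" unfolding D_def using d par by simp
  define \<theta> where "\<theta> = (\<sigma>/2)/D"
  have th0: "\<theta> > 0" unfolding \<theta>_def using d D0 by simp
  have Dth: "D* \<theta> = \<sigma>/2" unfolding \<theta>_def using D0 by simp
  define cm where "cm = c0 + \<theta>"
  have cm0: "cm \<ge> 0" unfolding cm_def using th0 par by simp
  define M1 where "M1 = cm* (1+lh) + e1 + e2"
  have M1e: "cm \<le> M1" "e1 + cm \<le> M1" "e2 + cm* lh \<le> M1" "e1 \<le> M1" "e2 \<le> M1"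
    unfolding M1_def using cm0 par by (simp_all add: algebra_simps)
  define g2 where "g2 = mu/(pp+mu)"
  have g2: "g2 > 0" "g2 \<le> 1" unfolding g2_def using par by auto
  define KW where "KW = (2/mu + 2* g2/(pp+a2))* (3* M1^2)"
  have KW0: "KW \<ge> 0" unfolding KW_def using par g2 by (intro mult_nonneg_nonneg add_nonneg_nonneg) auto
  define \<gamma> where "\<gamma> = \<sigma>/(2* (KW+1))"
  have ga0: "\<gamma> > 0" unfolding \<gamma>_def using d KW0 by simp
  have gaK: "\<gamma>* KW \<le> \<sigma>/2"
  proof -
    have "\<gamma>* (KW+1) = \<sigma>/2" unfolding \<gamma>_def using KW0 by (simp add: field_simps)
    then show ?thesis using ga0 by (simp add: algebra_simps)
  qed
  define Ds where "Ds = dA + dI + dH + dC"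
  have Ds0: "Ds > 0" unfolding Ds_def using d by simp
  define \<alpha> where "\<alpha> = min (\<sigma>/(2* Ds)) (min (mu/2) ((pp+a2)/2))"
  have al0: "\<alpha> > 0" unfolding \<alpha>_def using d par Ds0 by simp
  have am: "\<alpha> \<le> \<sigma>/(2* Ds)" "\<alpha> \<le> mu/2" "\<alpha> \<le> (pp+a2)/2" unfolding \<alpha>_def
    by (rule min.cobounded1, rule min.coboundedI2, rule min.cobounded1, rule min.coboundedI2, rule min.cobounded2)
  show ?thesis
  proof (rule exI[of _ \<theta>], rule conjI[OF th0], rule exI[of _ \<gamma>], rule conjI[OF ga0], rule exI[of _ \<alpha>], rule conjI[OF al0], intro allI impI)
    fix A I H C u z cc :: real
    assume cc: "\<bar>cc - c0\<bar> \<le> \<theta>"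
    define Y where "Y = A^2 + I^2 + H^2 + C^2"
    define h where "h = A + I + lh* H"
    have Y0: "Y \<ge> 0" unfolding Y_def by simp
    have Ah: "\<bar>A* h\<bar> \<le> (2+lh)* Y"
    proof -
      have "A* h = A* A + A* I + lh* (A* H)" unfolding h_def by (simp add: algebra_simps)
      then have "\<bar>A* h\<bar> \<le> \<bar>A* A\<bar> + \<bar>A* I\<bar> + \<bar>lh* (A* H)\<bar>" using abs3 by metis
      also have "\<dots> = A^2 + \<bar>A\<bar>* \<bar>I\<bar> + lh* (\<bar>A\<bar>* \<bar>H\<bar>)" using par by (simp add: abs_mult power2_eq_square)
      also have "\<dots> \<le> A^2 + (A^2 + I^2) + lh* (A^2 + H^2)"
        using par absprod[of A I] absprod[of A H] by (intro add_mono mult_left_mono) auto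
      also have "\<dots> \<le> 2* Y + lh* Y"
      proof -
        have "lh* (A^2 + H^2) \<le> lh* Y" unfolding Y_def using par by (intro mult_left_mono) auto
        moreover have "A^2 + (A^2 + I^2) \<le> 2* Y" unfolding Y_def by simp
        ultimately show ?thesis by linarith
      qed
      finally show ?thesis by (simp add: algebra_simps)
    qed
    have ypart: "dA* A* (cc* h - a0* A) + dI* I* (qv* A - a1* I) + dH* H* (a6* I + ek* C - a3* H)
        + dC* C* (b* H - a7* C) \<le> -(\<sigma>/2)* Y"
    proof -
      have e: "dA* A* (cc* h - a0* A) = dA* A* (c0* h - a0* A) + dA* ((cc - c0)* (A* h))" by (simp add: algebra_simps)
      have "(cc - c0)* (A* h) \<le> \<bar>cc - c0\<bar>* \<bar>A* h\<bar>" by (simp add: abs_mult[symmetric])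
      also have "\<dots> \<le> \<theta>* ((2+lh)* Y)"
        using cc Ah th0 by (intro mult_mono) auto
      finally have "dA* ((cc - c0)* (A* h)) \<le> dA* (\<theta>* ((2+lh)* Y))" using d by (intro mult_left_mono) auto
      also have "\<dots> = (dA* (2+lh)* \<theta>)* Y" by (simp add: algebra_simps)
      also have "dA* (2+lh)* \<theta> = \<sigma>/2" using Dth unfolding D_def .
      finally have x: "dA* ((cc - c0)* (A* h)) \<le> (\<sigma>/2)* Y" .
      have "dA* A* (c0* h - a0* A) + dI* I* (qv* A - a1* I) + dH* H* (a6* I + ek* C - a3* H)
        + dC* C* (b* H - a7* C) \<le> -\<sigma>* Y" using quad unfolding h_def Y_def .
      then show ?thesis unfolding e using x by linarith
    qed
    have ccb: "\<bar>cc\<bar> \<le> cm" unfolding cm_def using cc par by linarith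
    define L1 where "L1 = -cc* h + e1* I + e2* H"
    define L2 where "L2 = e1* I + e2* H"
    have YA: "A^2 + I^2 + H^2 \<le> Y" unfolding Y_def by simp
    have L1b: "L1^2 \<le> 3* M1^2* Y"
    proof -
      have "L1 = (-cc)* A + (e1 - cc)* I + (e2 - cc* lh)* H" unfolding L1_def h_def by (simp add: algebra_simps)
      moreover have "\<bar>-cc\<bar> \<le> M1" "\<bar>e1 - cc\<bar> \<le> M1" "\<bar>e2 - cc* lh\<bar> \<le> M1"
      proof -
        have "\<bar>cc* lh\<bar> \<le> cm* lh" using ccb par by (simp add: abs_mult mult_right_mono)
        then show "\<bar>-cc\<bar> \<le> M1" "\<bar>e1 - cc\<bar> \<le> M1" "\<bar>e2 - cc* lh\<bar> \<le> M1"
          using ccb M1e par cm0 abs_triangle_ineq4[of e1 cc] abs_triangle_ineq4[of e2 "cc* lh"] by linarith+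
      qed
      ultimately have "L1^2 \<le> 3* M1^2* (A^2 + I^2 + H^2)" using lin3_bound[of "-cc" M1 "e1 - cc" "e2 - cc* lh" A I H] by simp
      also have "\<dots> \<le> 3* M1^2* Y" using YA by (intro mult_left_mono) auto
      finally show ?thesis .
    qed
    have L2b: "L2^2 \<le> 3* M1^2* Y"
    proof -
      have "L2 = 0* A + e1* I + e2* H" unfolding L2_def by simp
      moreover have "\<bar>0\<bar> \<le> M1" "\<bar>e1\<bar> \<le> M1" "\<bar>e2\<bar> \<le> M1" using M1e par cm0 by auto
      ultimately have "L2^2 \<le> 3* M1^2* (A^2 + I^2 + H^2)" by (simp only: lin3_bound)
      also have "\<dots> \<le> 3* M1^2* Y" using YA by (intro mult_left_mono) auto
      finally show ?thesis .
    qed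
    define W where "W = 2* u* (-mu* u + L1) + 2* g2* z* (pp* (u - z) - a2* z + L2)"
    have W: "W \<le> -(mu/2)* u^2 - (g2* (pp+a2)/2)* z^2 + KW* Y"
    proof -
      have t1: "2* u* (g2* pp* z) \<le> mu* u^2 + (g2* pp* z)^2/mu"
        using young[of mu u "g2* pp* z"] par by simp
      have gm: "g2/mu = 1/(pp+mu)" unfolding g2_def using par by simp
      have "(g2* pp)^2/mu = g2* pp* (pp* (g2/mu))" by (simp add: power2_eq_square)
      also have "\<dots> = g2* pp* (pp/(pp+mu))" unfolding gm by simp
      also have "\<dots> \<le> g2* pp*1" using par g2 by (intro mult_left_mono) auto
      finally have t1b: "(g2* pp)^2/mu \<le> g2* pp" by simp
      have t1c: "(g2* pp* z)^2/mu = ((g2* pp)^2/mu)* z^2" by (simp add: power_mult_distrib)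
      have t1d: "((g2* pp)^2/mu)* z^2 \<le> g2* (pp+a2)* z^2"
      proof -
        have "g2* pp \<le> g2* (pp+a2)" using g2 par by (intro mult_left_mono) auto
        then show ?thesis using t1b by (intro mult_right_mono) auto
      qed
      have t2: "2* u* L1 \<le> (mu/2)* u^2 + L1^2/(mu/2)" using young[of "mu/2" u L1] par by simp
      have t3: "2* (g2* z)* L2 \<le> ((pp+a2)/(2* g2))* (g2* z)^2 + L2^2/((pp+a2)/(2* g2))"
        using young[of "(pp+a2)/(2* g2)" "g2* z" L2] par g2 by simp
      have t3b: "((pp+a2)/(2* g2))* (g2* z)^2 = (g2* (pp+a2)/2)* z^2" using g2 by (simp add: power2_eq_square field_simps)
      have t3c: "L2^2/((pp+a2)/(2* g2)) = (2* g2/(pp+a2))* L2^2" using g2 par by (simp add: field_simps)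
      have t4: "L1^2/(mu/2) + (2* g2/(pp+a2))* L2^2 \<le> KW* Y"
      proof -
        have "L1^2/(mu/2) = (2/mu)* L1^2" by simp
        also have "\<dots> \<le> (2/mu)* (3* M1^2* Y)" using L1b par by (intro mult_left_mono) auto
        finally have x1: "L1^2/(mu/2) \<le> (2/mu)* (3* M1^2* Y)" .
        have x2: "(2* g2/(pp+a2))* L2^2 \<le> (2* g2/(pp+a2))* (3* M1^2* Y)"
          using L2b par g2 by (intro mult_left_mono) auto
        have "KW* Y = (2/mu)* (3* M1^2* Y) + (2* g2/(pp+a2))* (3* M1^2* Y)" unfolding KW_def by (simp add: algebra_simps)
        then show ?thesis using x1 x2 by linarith
      qed
      define U where "U = mu* u^2"
      define Z where "Z = g2* (pp+a2)* z^2"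
      define X1 where "X1 = L1^2/(mu/2)"
      define X2 where "X2 = (2* g2/(pp+a2))* L2^2"
      have f1: "2* u* (g2* pp* z) \<le> U + Z" using t1 t1c t1d unfolding U_def Z_def by linarith
      have f2: "2* u* L1 \<le> U/2 + X1" using t2 unfolding U_def X1_def by simp
      have f3a: "2* (g2* z)* L2 \<le> (g2* (pp+a2)/2)* z^2 + (2* g2/(pp+a2))* L2^2" using t3[unfolded t3b t3c] .
      have "(g2* (pp+a2)/2)* z^2 = Z/2" unfolding Z_def by simp
      then have f3: "2* (g2* z)* L2 \<le> Z/2 + X2" using f3a unfolding X2_def by simp
      have f4: "X1 + X2 \<le> KW* Y" using t4 unfolding X1_def X2_def .
      have Wexp: "W = -2* U + 2* u* L1 + 2* u* (g2* pp* z) - 2* Z + 2* (g2* z)* L2"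
        unfolding W_def U_def Z_def by (simp add: algebra_simps power2_eq_square)
      have "W \<le> -(U/2) - Z/2 + KW* Y" unfolding Wexp using f1 f2 f3 f4 by linarith
      moreover have "-(U/2) - Z/2 + KW* Y = -(mu/2)* u^2 - (g2* (pp+a2)/2)* z^2 + KW* Y"
        unfolding U_def Z_def by simp
      ultimately show ?thesis by simp
    qed
    have fin: "2* (-(\<sigma>/2)* Y) + \<gamma>* (-(mu/2)* u^2 - (g2* (pp+a2)/2)* z^2 + KW* Y)
      \<le> -\<alpha>* (dA* A^2 + dI* I^2 + dH* H^2 + dC* C^2 + \<gamma>* (u^2 + g2* z^2))"
    proof -
      have h: "dA* A^2 + dI* I^2 + dH* H^2 + dC* C^2 \<le> Ds* Y"
      proof -
        have "dA* A^2 \<le> dA* Y" "dI* I^2 \<le> dI* Y" "dH* H^2 \<le> dH* Y" "dC* C^2 \<le> dC* Y"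
          unfolding Y_def using d by (intro mult_left_mono; simp)+
        then show ?thesis unfolding Ds_def by (simp add: algebra_simps)
      qed
      have "\<alpha>* (dA* A^2 + dI* I^2 + dH* H^2 + dC* C^2) \<le> \<alpha>* (Ds* Y)" using h al0 by (simp add: mult_left_mono)
      also have "\<dots> \<le> (\<sigma>/(2* Ds))* (Ds* Y)" using Ds0 Y0 am by (intro mult_right_mono) auto
      also have "\<dots> = (\<sigma>/2)* Y" using Ds0 by simp
      finally have a1: "\<alpha>* (dA* A^2 + dI* I^2 + dH* H^2 + dC* C^2) \<le> (\<sigma>/2)* Y" .
      have a2: "\<alpha>* (\<gamma>* u^2) \<le> (mu/2)* (\<gamma>* u^2)" using ga0 am by (intro mult_right_mono) auto
      have a3: "\<alpha>* (\<gamma>* (g2* z^2)) \<le> ((pp+a2)/2)* (\<gamma>* (g2* z^2))" using ga0 g2 am by (intro mult_right_mono) auto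
      have gKY: "\<gamma>* (KW* Y) \<le> (\<sigma>/2)* Y" using mult_right_mono[OF gaK Y0] by (simp add: mult.assoc)
      have e1: "-\<alpha>* (dA* A^2 + dI* I^2 + dH* H^2 + dC* C^2 + \<gamma>* (u^2 + g2* z^2))
         = -(\<alpha>* (dA* A^2 + dI* I^2 + dH* H^2 + dC* C^2)) - \<alpha>* (\<gamma>* u^2) - \<alpha>* (\<gamma>* (g2* z^2))"
        by (simp add: algebra_simps)
      have e2: "2* (-(\<sigma>/2)* Y) + \<gamma>* (-(mu/2)* u^2 - (g2* (pp+a2)/2)* z^2 + KW* Y)
         = -\<sigma>* Y - (mu/2)* (\<gamma>* u^2) - ((pp+a2)/2)* (\<gamma>* (g2* z^2)) + \<gamma>* (KW* Y)"
        by (simp add: algebra_simps)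
      show ?thesis unfolding e1 e2 using a1 a2 a3 gKY by linarith
    qed
    have "2* (dA* A* (cc* h - a0* A) + dI* I* (qv* A - a1* I) + dH* H* (a6* I + ek* C - a3* H)
        + dC* C* (b* H - a7* C)) + \<gamma>* W \<le> 2* (-(\<sigma>/2)* Y) + \<gamma>* (-(mu/2)* u^2 - (g2* (pp+a2)/2)* z^2 + KW* Y)"
      using ypart W ga0 by (intro add_mono mult_left_mono) auto
    with fin have "2* (dA* A* (cc* h - a0* A) + dI* I* (qv* A - a1* I) + dH* H* (a6* I + ek* C - a3* H)
        + dC* C* (b* H - a7* C)) + \<gamma>* W \<le> -\<alpha>* (dA* A^2 + dI* I^2 + dH* H^2 + dC* C^2 + \<gamma>* (u^2 + g2* z^2))"
      by linarith
    moreover have "W = 2* u* (-mu* u - cc* (A + I + lh* H) + e1* I + e2* H)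
          + 2* (mu/(pp+mu))* z* (pp* (u - z) - a2* z + e1* I + e2* H)"
      unfolding W_def L1_def L2_def h_def g2_def by (simp add: algebra_simps)
    ultimately show "2* (dA* A* (cc* (A + I + lh* H) - a0* A) + dI* I* (qv* A - a1* I) + dH* H* (a6* I + ek* C - a3* H)
        + dC* C* (b* H - a7* C))
      + \<gamma>* (2* u* (-mu* u - cc* (A + I + lh* H) + e1* I + e2* H)
          + 2* (mu/(pp+mu))* z* (pp* (u - z) - a2* z + e1* I + e2* H))
      \<le> -\<alpha>* (dA* A^2 + dI* I^2 + dH* H^2 + dC* C^2 + \<gamma>* (u^2 + (mu/(pp+mu))* z^2))"
      unfolding h_def g2_def by simp
  qed
qed

definition pS :: "state \<Rightarrow> real" where "pS X = fst X"
definition pA :: "state \<Rightarrow> real" where "pA X = fst (snd X)"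
definition pI :: "state \<Rightarrow> real" where "pI X = fst (snd (snd X))"
definition pQ :: "state \<Rightarrow> real" where "pQ X = fst (snd (snd (snd X)))"
definition pH :: "state \<Rightarrow> real" where "pH X = fst (snd (snd (snd (snd X))))"
definition pC :: "state \<Rightarrow> real" where "pC X = snd (snd (snd (snd (snd X))))"

lemma proj_simps[simp]:
  "pS (S,A,I,Q,H,C) = S" "pA (S,A,I,Q,H,C) = A" "pI (S,A,I,Q,H,C) = I"
  "pQ (S,A,I,Q,H,C) = Q" "pH (S,A,I,Q,H,C) = H" "pC (S,A,I,Q,H,C) = C"
  by (simp_all add: pS_def pA_def pI_def pQ_def pH_def pC_def)

lemma state_eta: "X = (pS X, pA X, pI X, pQ X, pH X, pC X)"
  by (simp add: pS_def pA_def pI_def pQ_def pH_def pC_def)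

lemma proj_diff[simp]:
  "pS (X - Y) = pS X - pS Y" "pA (X - Y) = pA X - pA Y" "pI (X - Y) = pI X - pI Y"
  "pQ (X - Y) = pQ X - pQ Y" "pH (X - Y) = pH X - pH Y" "pC (X - Y) = pC X - pC Y"
  by (simp_all add: pS_def pA_def pI_def pQ_def pH_def pC_def)

lemma norm_Pair_sq: "(norm (a, b))^2 = (norm a)^2 + (norm b)^2"
  by (simp add: norm_Pair)

lemma norm_state_sq: "(norm X)^2 = (pS X)^2 + (pA X)^2 + (pI X)^2 + (pQ X)^2 + (pH X)^2 + (pC X)^2"
  by (subst state_eta) (simp add: norm_Pair_sq)

lemma sq_le_norm: "a^2 \<le> (norm (X::'a::real_normed_vector))^2 \<Longrightarrow> \<bar>a\<bar> \<le> norm X"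
  by (metis abs_le_square_iff abs_norm_cancel)

lemma proj_le_norm:
  "\<bar>pS X\<bar> \<le> norm X" "\<bar>pA X\<bar> \<le> norm X" "\<bar>pI X\<bar> \<le> norm X"
  "\<bar>pQ X\<bar> \<le> norm X" "\<bar>pH X\<bar> \<le> norm X" "\<bar>pC X\<bar> \<le> norm X"
  by (intro sq_le_norm; simp add: norm_state_sq)+

lemma hvd_fst: "(f has_vector_derivative v) F \<Longrightarrow> ((\<lambda>t. fst (f t)) has_vector_derivative fst v) F"
  unfolding has_vector_derivative_def by (drule has_derivative_fst) simp

lemma hvd_snd: "(f has_vector_derivative v) F \<Longrightarrow> ((\<lambda>t. snd (f t)) has_vector_derivative snd v) F"
  unfolding has_vector_derivative_def by (drule has_derivative_snd) simp

lemma hvd_proj: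
  assumes "(x has_vector_derivative Y) F"
  shows "((\<lambda>t. pS (x t)) has_real_derivative pS Y) F" "((\<lambda>t. pA (x t)) has_real_derivative pA Y) F"
    "((\<lambda>t. pI (x t)) has_real_derivative pI Y) F" "((\<lambda>t. pQ (x t)) has_real_derivative pQ Y) F"
    "((\<lambda>t. pH (x t)) has_real_derivative pH Y) F" "((\<lambda>t. pC (x t)) has_real_derivative pC Y) F"
  unfolding pS_def pA_def pI_def pQ_def pH_def pC_def has_real_derivative_iff_has_vector_derivative
  by (intro hvd_fst hvd_snd assms)+

lemma R0_alg:
  fixes \<beta> a2 p lH a6 q \<upsilon> a1 a3 a7 \<delta>2 \<eta>\<kappa> f2 a0 p\<phi> :: real
  assumes "a0 \<noteq> 0" "a1 \<noteq> 0" "a3 * a7 - \<delta>2 * \<eta>\<kappa> * f2 \<noteq> 0" "p\<phi> + a2 \<noteq> 0"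
  shows "\<beta> * a2 * (1 - p) * ((lH * a6 * q * \<upsilon> + (a1 + q * \<upsilon>) * a3) * a7 - \<delta>2 * \<eta>\<kappa> * f2 * (q * \<upsilon> + a1))
      / (a0 * a1 * (a3 * a7 - \<delta>2 * \<eta>\<kappa> * f2) * (p\<phi> + a2))
    = \<beta> * (1 - p) * a2 / (p\<phi> + a2) * (1 + (q * \<upsilon>) / a1 + lH * a6 * (q * \<upsilon>) * a7 / (a1 * (a3 * a7 - (\<delta>2 * f2) * \<eta>\<kappa>))) / a0"
proof -
  define ch where "ch = a3 * a7 - \<delta>2 * \<eta>\<kappa> * f2"
  define D where "D = p\<phi> + a2"
  have ch2: "a3 * a7 - (\<delta>2 * f2) * \<eta>\<kappa> = ch" unfolding ch_def by (simp add: mult_ac)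
  have num: "(lH * a6 * q * \<upsilon> + (a1 + q * \<upsilon>) * a3) * a7 - \<delta>2 * \<eta>\<kappa> * f2 * (q * \<upsilon> + a1)
      = lH * a6 * (q * \<upsilon>) * a7 + (a1 + q * \<upsilon>) * ch" unfolding ch_def by (simp add: algebra_simps)
  have nz: "a0 \<noteq> 0" "a1 \<noteq> 0" "ch \<noteq> 0" "D \<noteq> 0" using assms unfolding ch_def D_def by auto
  show ?thesis unfolding num ch2 ch_def[symmetric] D_def[symmetric] using nz by (simp add: field_simps)
qed

locale covid = fixes P :: covid_params assumes adm: "admissible_params P"
begin

abbreviation "Lam \<equiv> c_Lambda P"
abbreviation "mu \<equiv> c_mu P"
abbreviation "bet \<equiv> c_beta P"
abbreviation "lh \<equiv> c_lH P"
abbreviation "ph \<equiv> c_phi P"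
abbreviation "ups \<equiv> c_upsilon P"
abbreviation "de1 \<equiv> c_delta1 P"
abbreviation "de2 \<equiv> c_delta2 P"
abbreviation "et \<equiv> c_eta P"
abbreviation "om \<equiv> c_omega P"
abbreviation "al1 \<equiv> c_alpha1 P"
abbreviation "al2 \<equiv> c_alpha2 P"
abbreviation "pr \<equiv> c_p P"
abbreviation "qr \<equiv> c_q P"
abbreviation "fr1 \<equiv> c_f1 P"
abbreviation "fr2 \<equiv> c_f2 P"
abbreviation "fr3 \<equiv> c_f3 P"
abbreviation "ka \<equiv> c_kappa P"
abbreviation "mr \<equiv> c_m P"

lemma pos: "Lam > 0" "mu > 0" "bet > 0" "lh > 0" "ph > 0" "ups > 0" "de1 > 0" "de2 > 0"
  "et > 0" "om > 0" "al1 > 0" "al2 > 0" "0 \<le> pr" "pr \<le> 1" "0 \<le> qr" "qr \<le> 1"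
  "0 \<le> fr1" "fr1 \<le> 1" "0 \<le> fr2" "fr2 \<le> 1" "0 \<le> fr3" "fr3 \<le> 1" "0 \<le> ka" "ka \<le> 1"
  "0 \<le> mr" "mr \<le> 1" "0 \<le> 1 - fr2 - fr3" "1 - fr2 - fr3 \<le> 1"
  using adm unfolding admissible_params_def by auto

definition "qv = qr * ups"
definition "a0 = qv + mu"
definition "a1 = de1 + mu"
definition "a2 = mr * om + mu"
definition "g3 = 1 - fr2 - fr3"
definition "a3 = de2 * g3 + de2 * fr2 + al1 * fr3 + mu"
definition "a6 = de1 * (1 - fr1)"
definition "ek = et * (1 - ka)"
definition "a7 = al2 * ka + ek + mu"
definition "bb = de2 * fr2"
definition "chi = a3 * a7 - bb * ek"
definition "pp = pr * ph"
definition "c0 = bet * (1 - pr) * a2 / (pp + a2)"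
definition "S0 = Lam * a2 / ((pp + a2) * mu)"
definition "Q0 = pp * Lam / ((pp + a2) * mu)"
definition "N0 = Lam / mu"
definition "e1 = de1 * fr1"
definition "e2 = de2 * g3"

definition "NN X = pS X + pA X + pI X + pQ X + pH X + pC X"
definition "hh X = pA X + pI X + lh * pH X"
definition "cc X = bet * (1 - pr) * pS X / NN X"

lemma dpos: "qv \<ge> 0" "a0 > 0" "a1 > 0" "a2 > 0" "g3 \<ge> 0" "a3 > 0" "a6 \<ge> 0" "ek \<ge> 0" "a7 > 0"
  "bb \<ge> 0" "chi > 0" "pp \<ge> 0" "c0 \<ge> 0" "S0 > 0" "Q0 \<ge> 0" "N0 > 0" "e1 \<ge> 0" "e2 \<ge> 0"
  "a3 \<ge> bb + mu" "a7 \<ge> ek + mu"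
proof -
  note p = pos
  show q: "qv \<ge> 0" unfolding qv_def using p by simp
  show "a0 > 0" unfolding a0_def using q p by simp
  show "a1 > 0" unfolding a1_def using p by simp
  show a2: "a2 > 0" unfolding a2_def using p by (simp add: add_nonneg_pos)
  show g3: "g3 \<ge> 0" unfolding g3_def using p by simp
  show a3b: "a3 \<ge> bb + mu" unfolding a3_def bb_def using p g3 by simp
  show bb: "bb \<ge> 0" unfolding bb_def using p by simp
  show a3: "a3 > 0" using a3b bb p by simp
  show "a6 \<ge> 0" unfolding a6_def using p by simp
  show ek: "ek \<ge> 0" unfolding ek_def using p by simp
  show a7b: "a7 \<ge> ek + mu" unfolding a7_def using p by simp
  show a7: "a7 > 0" using a7b ek p by simp
  show "chi > 0"
  proof -
    have "a3 * a7 \<ge> (bb + mu) * (ek + mu)" using a3b a7b bb ek p by (intro mult_mono) auto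
    moreover have "(bb + mu) * (ek + mu) > bb * ek" using bb ek p by (simp add: algebra_simps add_pos_nonneg)
    ultimately show ?thesis unfolding chi_def by simp
  qed
  show pp: "pp \<ge> 0" unfolding pp_def using p by simp
  show "c0 \<ge> 0" unfolding c0_def using p pp a2 by simp
  show "S0 > 0" unfolding S0_def using p pp a2 by simp
  show "Q0 \<ge> 0" unfolding Q0_def using p pp a2 by simp
  show "N0 > 0" unfolding N0_def using p by simp
  show "e1 \<ge> 0" unfolding e1_def using p by simp
  show "e2 \<ge> 0" unfolding e2_def using p g3 by simp
qed

lemma S0Q0: "S0 + Q0 = N0"
proof -
  have nz: "pp + a2 \<noteq> 0" using dpos by simp
  have "S0 + Q0 = (Lam * (pp + a2)) / ((pp + a2) * mu)"
    unfolding S0_def Q0_def by (simp add: add_divide_distrib[symmetric] algebra_simps)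
  also have "\<dots> = Lam / mu" using nz by simp
  finally show ?thesis unfolding N0_def .
qed

lemma Lam_eq: "Lam = mu * S0 + mu * Q0"
  using S0Q0 pos unfolding N0_def by (simp add: field_simps algebra_simps)

lemma ppS0: "pp * S0 = a2 * Q0"
  unfolding S0_def Q0_def by (simp add: algebra_simps)

lemma frac_helper: "L > 0 \<Longrightarrow> m > 0 \<Longrightarrow> (D::real) > 0 \<Longrightarrow> (L * a / (D * m)) / (L / m) = a / D"
  by (simp add: field_simps)

lemma c0_eq: "c0 = bet * (1 - pr) * (S0 / N0)"
proof -
  have "S0 / N0 = a2 / (pp + a2)" unfolding S0_def N0_def using pos dpos by (intro frac_helper) auto
  then show ?thesis unfolding c0_def by simp
qed

lemma field_eq: "covid_field P X = (Lam + om * mr * pQ X - (pp + mu) * pS X - cc X * hh X,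
    cc X * hh X - a0 * pA X, qv * pA X - a1 * pI X,
    pp * pS X + e1 * pI X + e2 * pH X - a2 * pQ X,
    a6 * pI X + ek * pC X - a3 * pH X, bb * pH X - a7 * pC X)"
proof -
  obtain S A I Q H C where X: "X = (S,A,I,Q,H,C)" by (metis prod.collapse)
  define L where "L = bet * (A + I + lh * H) / (S + A + I + Q + H + C)"
  have raw: "covid_field P X = (Lam + om * mr * Q - (L * (1 - pr) + ph * pr + mu) * S,
          L * (1 - pr) * S - (qr * ups + mu) * A,
          qr * ups * A - (de1 + mu) * I,
          ph * pr * S + de1 * fr1 * I + de2 * (1 - fr2 - fr3) * H - (om * mr + mu) * Q,
          de1 * (1 - fr1) * I + et * (1 - ka) * C
            - (de2 * (1 - fr2 - fr3) + de2 * fr2 + al1 * fr3 + mu) * H,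
          de2 * fr2 * H - (et * (1 - ka) + al2 * ka + mu) * C)"
    unfolding X covid_field_def Let_def L_def by simp
  have lam: "L * (1 - pr) * S = cc X * hh X"
    unfolding L_def cc_def hh_def NN_def X by (simp add: times_divide_eq_left times_divide_eq_right mult_ac)
  show ?thesis
    unfolding raw lam[symmetric] unfolding X
    by (simp add: qv_def a0_def a1_def a2_def pp_def e1_def e2_def g3_def a6_def ek_def a3_def bb_def a7_def
        algebra_simps)
qed

lemma DFE_eq: "DFE P = (S0, 0, 0, Q0, 0, 0)"
  unfolding DFE_def S0_def Q0_def a2_def pp_def Let_def by simp

lemma R0_eq: "R0 P = c0 * (1 + qv / a1 + lh * a6 * qv * a7 / (a1 * chi)) / a0"
proof -
  have nz: "a0 \<noteq> 0" "a1 \<noteq> 0" "chi \<noteq> 0" "pp + a2 \<noteq> 0" using dpos by auto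
  have "R0 P = bet * (1 - pr) * a2 / (pp + a2) *
      (1 + qv / a1 + lh * a6 * qv * a7 / (a1 * (a3 * a7 - bb * ek))) / a0"
    unfolding R0_def Let_def bb_def a2_def pp_def qv_def a1_def a6_def a3_def a7_def ek_def g3_def a0_def
    by (rule R0_alg) (use nz in \<open>simp_all add: a0_def qv_def a1_def chi_def bb_def pp_def
      a2_def a3_def a7_def ek_def g3_def a6_def mult_ac\<close>)
  then show ?thesis unfolding c0_def chi_def .
qed

end

definition lipE :: "'a::metric_space set \<Rightarrow> ('a \<Rightarrow> 'b::metric_space) \<Rightarrow> bool"
  where "lipE U f \<longleftrightarrow> (\<exists>L. L-lipschitz_on U f)"

lemma lipE_const: "lipE U (\<lambda>x. c)"
  unfolding lipE_def using lipschitz_on_constant by blast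

lemma lipE_add: "lipE U f \<Longrightarrow> lipE U g \<Longrightarrow> lipE U (\<lambda>x. f x + g x :: 'b::real_normed_vector)"
  unfolding lipE_def using lipschitz_on_add by blast

lemma lipE_diff: "lipE U f \<Longrightarrow> lipE U g \<Longrightarrow> lipE U (\<lambda>x. f x - g x :: 'b::real_normed_vector)"
  unfolding lipE_def using lipschitz_on_diff by blast

lemma lipE_cmult: "lipE U f \<Longrightarrow> lipE U (\<lambda>x. c * f x :: real)"
proof -
  assume "lipE U f"
  then obtain L where "L-lipschitz_on U f" unfolding lipE_def by blast
  then have "(\<bar>c\<bar> * L)-lipschitz_on U (\<lambda>x. c *\<^sub>R f x)" by (rule lipschitz_on_cmult)
  then show ?thesis unfolding lipE_def by auto
qed

lemma lipE_pair: "lipE U f \<Longrightarrow> lipE U g \<Longrightarrow> lipE U (\<lambda>x. (f x, g x))"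
  unfolding lipE_def using lipschitz_on_Pair by blast

lemma lip_bounded_real:
  fixes f :: "'a::metric_space \<Rightarrow> real"
  assumes "bounded U" "L-lipschitz_on U f"
  shows "\<exists>B. \<forall>x\<in>U. \<bar>f x\<bar> \<le> B"
proof (cases "U = {}")
  case True then show ?thesis by auto
next
  case False
  then obtain x0 where x0: "x0 \<in> U" by blast
  obtain R where R: "\<forall>x\<in>U. dist x0 x \<le> R" using assms(1) bounded_any_center[of U x0] by auto
  have L0: "L \<ge> 0" using assms(2) lipschitz_on_nonneg by blast
  show ?thesis
  proof (intro exI ballI)
    fix x assume x: "x \<in> U"
    have "dist (f x0) (f x) \<le> L * dist x0 x" using lipschitz_onD[OF assms(2) x0 x] .
    also have "\<dots> \<le> L * R" using R x L0 by (intro mult_left_mono) auto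
    finally have "\<bar>f x0 - f x\<bar> \<le> L * R" by (simp add: dist_real_def)
    then show "\<bar>f x\<bar> \<le> \<bar>f x0\<bar> + L * R" by linarith
  qed
qed

lemma lipE_mult:
  assumes U: "bounded U" and f: "lipE U f" and g: "lipE U g"
  shows "lipE U (\<lambda>x. f x * g x :: real)"
proof -
  obtain Lf where Lf: "Lf-lipschitz_on U f" using f unfolding lipE_def by blast
  obtain Lg where Lg: "Lg-lipschitz_on U g" using g unfolding lipE_def by blast
  obtain Bf0 where Bf': "\<forall>x\<in>U. \<bar>f x\<bar> \<le> Bf0" using lip_bounded_real[OF U Lf] by blast
  obtain Bg0 where Bg': "\<forall>x\<in>U. \<bar>g x\<bar> \<le> Bg0" using lip_bounded_real[OF U Lg] by blast
  define Bf where "Bf = max Bf0 0"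
  define Bg where "Bg = max Bg0 0"
  have Bf: "\<forall>x\<in>U. \<bar>f x\<bar> \<le> Bf" "Bf \<ge> 0" using Bf' unfolding Bf_def by force+
  have Bg: "\<forall>x\<in>U. \<bar>g x\<bar> \<le> Bg" "Bg \<ge> 0" using Bg' unfolding Bg_def by force+
  have Lf0: "Lf \<ge> 0" "Lg \<ge> 0" using Lf Lg lipschitz_on_nonneg by blast+
  have "(Bf * Lg + Bg * Lf)-lipschitz_on U (\<lambda>x. f x * g x)"
  proof (rule lipschitz_onI)
    fix x y assume x: "x \<in> U" and y: "y \<in> U"
    have Bf0: "Bf \<ge> 0" "Bg \<ge> 0" using Bf Bg by auto
    have "f x * g x - f y * g y = f x * (g x - g y) + g y * (f x - f y)" by (simp add: algebra_simps)
    then have "\<bar>f x * g x - f y * g y\<bar> \<le> \<bar>f x\<bar> * \<bar>g x - g y\<bar> + \<bar>g y\<bar> * \<bar>f x - f y\<bar>"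
      by (simp add: abs_mult[symmetric] abs_triangle_ineq)
    also have "\<dots> \<le> Bf * (Lg * dist x y) + Bg * (Lf * dist x y)"
      using lipschitz_onD[OF Lf x y] lipschitz_onD[OF Lg x y] Bf Bg x y Bf0
      by (intro add_mono mult_mono) (auto simp: dist_real_def)
    finally show "dist (f x * g x) (f y * g y) \<le> (Bf * Lg + Bg * Lf) * dist x y"
      by (simp add: dist_real_def algebra_simps)
  next
    show "0 \<le> Bf * Lg + Bg * Lf" using Bf Bg Lf0 by simp
  qed
  then show ?thesis unfolding lipE_def by blast
qed

lemma lipE_inv:
  assumes f: "lipE U f" and m: "m > 0" and fm: "\<forall>x\<in>U. f x \<ge> m"
  shows "lipE U (\<lambda>x. 1 / f x :: real)"
proof -
  obtain L where L: "L-lipschitz_on U f" using f unfolding lipE_def by blast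
  have L0: "L \<ge> 0" using L lipschitz_on_nonneg by blast
  have "(L / m^2)-lipschitz_on U (\<lambda>x. 1 / f x)"
  proof (rule lipschitz_onI)
    show "0 \<le> L / m^2" using L0 by simp
    fix x y assume x: "x \<in> U" and y: "y \<in> U"
    have fx: "f x \<ge> m" "f y \<ge> m" using fm x y by auto
    have "1 / f x - 1 / f y = (f y - f x) / (f x * f y)" using fx m by (simp add: field_simps)
    then have "\<bar>1 / f x - 1 / f y\<bar> = \<bar>f y - f x\<bar> / (f x * f y)" using fx m by (simp add: abs_div)
    also have "\<dots> \<le> (L * dist x y) / (m * m)"
    proof (rule frac_le)
      show "0 \<le> L * dist x y" using L0 by simp
      show "\<bar>f y - f x\<bar> \<le> L * dist x y" using lipschitz_onD[OF L x y] by (simp add: dist_real_def abs_minus_commute)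
      show "0 < m * m" using m by simp
      show "m * m \<le> f x * f y" using fx m by (intro mult_mono) auto
    qed
    finally show "dist (1 / f x) (1 / f y) \<le> L / m^2 * dist x y"
      by (simp add: dist_real_def power2_eq_square)
  qed
  then show ?thesis unfolding lipE_def by blast
qed

lemma lipE_proj:
  "lipE U pS" "lipE U pA" "lipE U pI" "lipE U pQ" "lipE U pH" "lipE U pC"
proof -
  have h: "1-lipschitz_on U p" if "\<And>X Y. \<bar>p X - p Y\<bar> \<le> norm (X - Y)" for p :: "state \<Rightarrow> real"
    using that by (intro lipschitz_onI) (auto simp: dist_real_def dist_norm)
  show "lipE U pS" "lipE U pA" "lipE U pI" "lipE U pQ" "lipE U pH" "lipE U pC"
    unfolding lipE_def
    by (rule exI, rule h, metis proj_diff proj_le_norm)+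
qed

lemma lipE_lip: "lipE U f \<Longrightarrow> \<exists>L. L-lipschitz_on U f" unfolding lipE_def .

context covid begin

lemma comp_bounds:
  assumes "dist X (DFE P) \<le> r"
  shows "\<bar>pS X - S0\<bar> \<le> r" "\<bar>pA X\<bar> \<le> r" "\<bar>pI X\<bar> \<le> r" "\<bar>pQ X - Q0\<bar> \<le> r" "\<bar>pH X\<bar> \<le> r" "\<bar>pC X\<bar> \<le> r"
proof -
  have d: "dist X (DFE P) = norm (X - DFE P)" by (rule dist_norm)
  have "\<bar>pS (X - DFE P)\<bar> \<le> r" "\<bar>pA (X - DFE P)\<bar> \<le> r" "\<bar>pI (X - DFE P)\<bar> \<le> r"
       "\<bar>pQ (X - DFE P)\<bar> \<le> r" "\<bar>pH (X - DFE P)\<bar> \<le> r" "\<bar>pC (X - DFE P)\<bar> \<le> r"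
    using proj_le_norm[of "X - DFE P"] assms d by linarith+
  then show "\<bar>pS X - S0\<bar> \<le> r" "\<bar>pA X\<bar> \<le> r" "\<bar>pI X\<bar> \<le> r" "\<bar>pQ X - Q0\<bar> \<le> r" "\<bar>pH X\<bar> \<le> r" "\<bar>pC X\<bar> \<le> r"
    unfolding proj_diff DFE_eq proj_simps by simp_all
qed

lemma NN_bound:
  assumes "dist X (DFE P) \<le> r" "r \<le> N0/12"
  shows "NN X \<ge> N0/2" "\<bar>NN X - N0\<bar> \<le> 6*r"
proof -
  note c = comp_bounds[OF assms(1)]
  have "NN X - N0 = (pS X - S0) + pA X + pI X + (pQ X - Q0) + pH X + pC X"
    unfolding NN_def using S0Q0 by linarith
  then show "\<bar>NN X - N0\<bar> \<le> 6*r" using c by linarith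
  then show "NN X \<ge> N0/2" using assms(2) by linarith
qed

lemma cc_bound:
  assumes "dist X (DFE P) \<le> r" "r \<le> N0/12" "r \<le> S0/2"
  shows "pS X \<ge> S0/2" "cc X \<ge> 0" "\<bar>cc X - c0\<bar> \<le> bet * (1 - pr) * (14 * r / N0)"
proof -
  note c = comp_bounds[OF assms(1)]
  note n = NN_bound[OF assms(1,2)]
  have N0: "N0 > 0" "S0 > 0" "Q0 \<ge> 0" using dpos by auto
  show S: "pS X \<ge> S0/2" using c assms(3) by linarith
  have NNp: "NN X > 0" using n N0 by linarith
  show "cc X \<ge> 0" unfolding cc_def using pos S N0 NNp by simp
  have r0: "r \<ge> 0" using c(1) by linarith
  have num: "\<bar>pS X * N0 - S0 * NN X\<bar> \<le> 7 * r * N0"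
  proof -
    have "pS X * N0 - S0 * NN X = (pS X - S0) * N0 - S0 * (NN X - N0)" by (simp add: algebra_simps)
    then have "\<bar>pS X * N0 - S0 * NN X\<bar> \<le> \<bar>(pS X - S0) * N0\<bar> + \<bar>S0 * (NN X - N0)\<bar>"
      by (simp only: abs_triangle_ineq4)
    also have "\<dots> = \<bar>pS X - S0\<bar> * N0 + S0 * \<bar>NN X - N0\<bar>" using N0 by (simp add: abs_mult)
    also have "\<dots> \<le> r * N0 + N0 * (6 * r)"
      using c n N0 S0Q0 r0 by (intro add_mono mult_mono) auto
    finally show ?thesis by simp
  qed
  have "pS X / NN X - S0 / N0 = (pS X * N0 - S0 * NN X) / (NN X * N0)" using NNp N0 by (simp add: field_simps)
  then have "\<bar>pS X / NN X - S0 / N0\<bar> = \<bar>pS X * N0 - S0 * NN X\<bar> / (NN X * N0)" using NNp N0 by (simp add: abs_div)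
  also have "\<dots> \<le> (7 * r * N0) / ((N0/2) * N0)"
    using num NNp N0 n r0 by (intro frac_le mult_right_mono) auto
  also have "\<dots> = 14 * r / N0" using N0 by (simp add: field_simps)
  finally have q: "\<bar>pS X / NN X - S0 / N0\<bar> \<le> 14 * r / N0" .
  have "cc X - c0 = bet * (1 - pr) * (pS X / NN X - S0 / N0)" unfolding cc_def c0_eq using NNp N0 by (simp add: field_simps)
  then have "\<bar>cc X - c0\<bar> = bet * (1 - pr) * \<bar>pS X / NN X - S0 / N0\<bar>" using pos by (simp add: abs_mult)
  also have "\<dots> \<le> bet * (1 - pr) * (14 * r / N0)" using q pos by (intro mult_left_mono) auto
  finally show "\<bar>cc X - c0\<bar> \<le> bet * (1 - pr) * (14 * r / N0)" .
qed

lemma equilibrium: "covid_field P (DFE P) = 0"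
proof -
  have hh0: "hh (DFE P) = 0" unfolding hh_def DFE_eq by simp
  have c1: "Lam + om * mr * Q0 - (pp + mu) * S0 = 0"
    using Lam_eq ppS0 unfolding a2_def by (simp add: algebra_simps)
  have c4: "pp * S0 - a2 * Q0 = 0" using ppS0 by simp
  show ?thesis unfolding field_eq hh0 using c1 c4 unfolding DFE_eq by (simp add: zero_prod_def)
qed

lemma F_lip:
  assumes "0 < r" "r \<le> N0/12"
  shows "\<exists>L. L-lipschitz_on (cball (DFE P) r) (covid_field P)"
proof -
  let ?U = "cball (DFE P) r"
  have bU: "bounded ?U" by simp
  have NNm: "\<forall>X\<in>?U. NN X \<ge> N0/2" using NN_bound assms by (auto simp: dist_commute)
  have N0: "N0/2 > 0" using dpos by simp
  have lNN: "lipE ?U NN" unfolding NN_def by (intro lipE_add lipE_proj)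
  have linv: "lipE ?U (\<lambda>X. 1 / NN X)" by (rule lipE_inv[OF lNN N0 NNm])
  have lcc: "lipE ?U cc"
  proof -
    have "lipE ?U (\<lambda>X. (bet * (1 - pr) * pS X) * (1 / NN X))"
      by (intro lipE_mult bU lipE_cmult lipE_proj linv)
    moreover have "(\<lambda>X. (bet * (1 - pr) * pS X) * (1 / NN X)) = cc" unfolding cc_def by auto
    ultimately show ?thesis by simp
  qed
  have lhh: "lipE ?U hh" unfolding hh_def by (intro lipE_add lipE_cmult lipE_proj)
  have lch: "lipE ?U (\<lambda>X. cc X * hh X)" by (intro lipE_mult bU lcc lhh)
  have "lipE ?U (\<lambda>X. (Lam + om * mr * pQ X - (pp + mu) * pS X - cc X * hh X,
    cc X * hh X - a0 * pA X, qv * pA X - a1 * pI X,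
    pp * pS X + e1 * pI X + e2 * pH X - a2 * pQ X,
    a6 * pI X + ek * pC X - a3 * pH X, bb * pH X - a7 * pC X))"
    by (intro lipE_pair lipE_add lipE_diff lipE_cmult lipE_proj lipE_const lch)
  moreover have "(\<lambda>X. (Lam + om * mr * pQ X - (pp + mu) * pS X - cc X * hh X,
    cc X * hh X - a0 * pA X, qv * pA X - a1 * pI X,
    pp * pS X + e1 * pI X + e2 * pH X - a2 * pQ X,
    a6 * pI X + ek * pC X - a3 * pH X, bb * pH X - a7 * pC X)) = covid_field P"
    using field_eq by auto
  ultimately have "lipE ?U (covid_field P)" by metis
  then show ?thesis unfolding lipE_def .
qed

lemma G_exists:
  assumes "0 < r" "r \<le> N0/12"
  shows "\<exists>G L B. (\<forall>x y. norm (G x - G y) \<le> L * norm (x - y)) \<and> L > 0 \<and> (\<forall>x. norm (G x) \<le> B)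
     \<and> (\<forall>X. dist X (DFE P) \<le> r \<longrightarrow> G X = covid_field P X)"
proof -
  let ?U = "cball (DFE P) r"
  obtain L where L: "L-lipschitz_on ?U (covid_field P)" using F_lip[OF assms] by blast
  have L0: "L \<ge> 0" using L lipschitz_on_nonneg by blast
  define G where "G X = covid_field P (closest_point ?U X)" for X
  have cU: "convex ?U" "closed ?U" "?U \<noteq> {}" using assms by auto
  have cpU: "closest_point ?U X \<in> ?U" for X by (rule closest_point_in_set) (use cU in auto)
  have lipG: "norm (G x - G y) \<le> (L + 1) * norm (x - y)" for x y
  proof -
    have "dist (G x) (G y) \<le> L * dist (closest_point ?U x) (closest_point ?U y)"
      unfolding G_def by (rule lipschitz_onD[OF L cpU cpU])
    also have "\<dots> \<le> L * dist x y" using L0 closest_point_lipschitz[OF cU] by (intro mult_left_mono) auto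
    also have "\<dots> \<le> (L + 1) * dist x y" by (simp add: algebra_simps)
    finally show ?thesis by (simp add: dist_norm)
  qed
  have "compact (covid_field P ` ?U)"
    by (rule compact_continuous_image[OF lipschitz_on_continuous_on[OF L]]) simp
  then obtain B where B: "\<forall>y\<in>covid_field P ` ?U. norm y \<le> B"
    using compact_imp_bounded bounded_iff by metis
  have bG: "norm (G x) \<le> B" for x unfolding G_def using B cpU by blast
  have GF: "G X = covid_field P X" if "dist X (DFE P) \<le> r" for X
    unfolding G_def using that by (subst closest_point_self) (auto simp: dist_commute)
  show ?thesis using lipG bG GF L0 by (intro exI[of _ G] exI[of _ "L + 1"] exI[of _ B]) auto
qed

end

lemma expdec: "a > (0::real) \<Longrightarrow> ((\<lambda>t. exp (-a * t)) \<longlongrightarrow> 0) at_top"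
  by real_asymp

lemma solution_subset:
  assumes "is_solution_on F S x" "T \<subseteq> S"
  shows "is_solution_on F T x"
  using assms unfolding is_solution_on_def by (auto intro: has_vector_derivative_within_subset)

lemma small_start:
  fixes k1 K m d :: real
  assumes "k1 > 0" "K > 0" "m > 0" "d < m * sqrt (k1 / (2*K))" "0 \<le> d"
  shows "K * d^2 < k1 * m^2"
proof -
  have "d^2 < (m * sqrt (k1 / (2*K)))^2" using assms by (intro power_strict_mono) auto
  also have "\<dots> = m^2 * (k1 / (2*K))" using assms by (simp add: power_mult_distrib)
  finally have "K * d^2 < K * (m^2 * (k1 / (2*K)))" using assms(2) by (rule mult_strict_left_mono)
  also have "\<dots> = k1 * m^2 / 2" using assms by (simp add: field_simps)
  also have "\<dots> < k1 * m^2" using assms by simp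
  finally show ?thesis .
qed

lemma las_generic:
  fixes F G :: "'a::banach \<Rightarrow> 'a" and V :: "'a \<Rightarrow> real" and dV :: "'a \<Rightarrow> 'a \<Rightarrow> real"
  assumes Fe: "F e = 0"
    and k1: "k1 > 0" and K: "K > 0"
    and Vlow: "\<And>X. k1 * (dist X e)^2 \<le> V X" and Vup: "\<And>X. V X \<le> K * (dist X e)^2"
    and Vc: "continuous_on UNIV V"
    and Vd: "\<And>x t Y. (x has_vector_derivative Y) (at t) \<Longrightarrow> ((\<lambda>t. V (x t)) has_real_derivative dV (x t) Y) (at t)"
    and dec: "\<And>X. dist X e < \<rho> \<Longrightarrow> dV X (F X) \<le> -\<alpha> * V X" and al: "\<alpha> > 0" and rho: "\<rho> > 0"
    and lipG: "\<And>x y. norm (G x - G y) \<le> L * norm (x - y)" and L: "L > 0"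
    and bG: "\<And>x. norm (G x) \<le> B"
    and GF: "\<And>X. dist X e \<le> r \<Longrightarrow> G X = F X" and r: "0 < r" "r \<le> \<rho>"
  shows "locally_asymptotically_stable F e"
proof -
  have decay: "\<forall>t\<in>{0..T}. V (x t) \<le> V (x 0) * exp (-\<alpha> * t)"
    if "is_solution_on F {0..T} x" "V (x 0) < k1 * \<rho>^2" for x T
    by (rule lyap_decay[where V=V and dV=dV and F=F and e=e and \<rho>=\<rho> and \<alpha>=\<alpha>, OF k1 Vlow Vc Vd dec _ rho that]) (use al in auto)
  have V0: "V X \<ge> 0" for X using Vlow[of X] k1 by (smt (verit) mult_nonneg_nonneg zero_le_power2)
  have distV: "(dist X e)^2 \<le> V X / k1" for X using Vlow[of X] k1 by (simp add: field_simps)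
  have stable: "lyapunov_stable F e"
    unfolding lyapunov_stable_def
  proof (intro allI impI)
    fix \<epsilon> :: real assume e0: "\<epsilon> > 0"
    define m where "m = min \<epsilon> \<rho>"
    have m0: "m > 0" unfolding m_def using e0 rho by simp
    define \<delta> where "\<delta> = m * sqrt (k1 / (2*K))"
    have d0: "\<delta> > 0" unfolding \<delta>_def using m0 k1 K by simp
    show "\<exists>\<delta>>0. \<forall>T\<ge>0. \<forall>x. is_solution_on F {0..T} x \<and> dist (x 0) e < \<delta> \<longrightarrow> (\<forall>t\<in>{0..T}. dist (x t) e < \<epsilon>)"
    proof (intro exI[of _ \<delta>] conjI d0 allI impI ballI)
      fix T :: real and x t assume T: "0 \<le> T" and h: "is_solution_on F {0..T} x \<and> dist (x 0) e < \<delta>"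
        and t: "t \<in> {0..T}"
      have "K * (dist (x 0) e)^2 < k1 * m^2" using h k1 K m0 by (intro small_start) (auto simp: \<delta>_def)
      then have Vx0: "V (x 0) < k1 * m^2" using Vup[of "x 0"] by linarith
      have "k1 * m^2 \<le> k1 * \<rho>^2" using k1 m0 unfolding m_def by (intro mult_left_mono power_mono) auto
      then have "V (x 0) < k1 * \<rho>^2" using Vx0 by linarith
      then have "V (x t) \<le> V (x 0) * exp (-\<alpha> * t)" using decay h t by blast
      also have "\<dots> \<le> V (x 0) * 1" using t al V0 by (intro mult_left_mono) auto
      finally have "k1 * (dist (x t) e)^2 < k1 * m^2" using Vlow[of "x t"] Vx0 by linarith
      then have "(dist (x t) e)^2 < m^2" using k1 by simp
      then have "dist (x t) e < m" using m0 by (simp add: power_less_imp_less_base)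
      then show "dist (x t) e < \<epsilon>" unfolding m_def by simp
    qed
  qed
  define \<delta> where "\<delta> = r * sqrt (k1 / (2*K))"
  have d0: "\<delta> > 0" unfolding \<delta>_def using r k1 K by simp
  have attract: "(\<exists>x. is_solution_on F {0..} x \<and> x 0 = x0) \<and>
        (\<forall>x. is_solution_on F {0..} x \<and> x 0 = x0 \<longrightarrow> (x \<longlongrightarrow> e) at_top)"
    if x0: "dist x0 e < \<delta>" for x0
  proof -
    have "K * (dist x0 e)^2 < k1 * r^2" using x0 k1 K r by (intro small_start) (auto simp: \<delta>_def)
    then have Vx0: "V x0 < k1 * r^2" using Vup[of x0] by linarith
    have "k1 * r^2 \<le> k1 * \<rho>^2" using k1 r by (intro mult_left_mono power_mono) auto
    then have Vx0': "V x0 < k1 * \<rho>^2" using Vx0 by linarith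
    obtain x where x00: "x 0 = x0" and xd: "\<forall>t\<ge>0. (x has_vector_derivative G (x t)) (at t within {0..})"
      using picard_exists[OF lipG L bG, of x0] by blast
    have solG: "is_solution_on G {0..T} x" for T
      unfolding is_solution_on_def
    proof
      fix t assume "t \<in> {0..T}"
      then have t: "t \<ge> 0" by simp
      show "(x has_vector_derivative G (x t)) (at t within {0..T})"
        by (rule has_vector_derivative_within_subset[OF xd[rule_format, OF t]]) auto
    qed
    have inr: "dist (x t) e < r" if t: "t \<ge> 0" for t
    proof -
      have decG: "dV X (G X) \<le> -\<alpha> * V X" if "dist X e < r" for X
        using that GF[of X] dec[of X] r by auto
      have "\<forall>s\<in>{0..t}. V (x s) \<le> V (x 0) * exp (-\<alpha> * s)"
        by (rule lyap_decay[where V=V and dV=dV and F=G and e=e and \<rho>=r and \<alpha>=\<alpha>, OF k1 Vlow Vc Vd decG _ r(1) solG]) (use al x00 Vx0 in auto)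
      then have "V (x t) \<le> V x0 * exp (-\<alpha> * t)" using t x00 by auto
      also have "\<dots> \<le> V x0 * 1" using t al V0 by (intro mult_left_mono) auto
      finally have "k1 * (dist (x t) e)^2 < k1 * r^2" using Vlow[of "x t"] Vx0 by linarith
      then have "(dist (x t) e)^2 < r^2" using k1 by simp
      then show ?thesis using r by (simp add: power_less_imp_less_base)
    qed
    have ex: "is_solution_on F {0..} x"
      unfolding is_solution_on_def
    proof
      fix t :: real assume "t \<in> {0..}"
      then have t: "t \<ge> 0" by simp
      have "G (x t) = F (x t)" using inr[OF t] by (intro GF) auto
      then show "(x has_vector_derivative F (x t)) (at t within {0..})" using xd[rule_format, OF t] by simp
    qed
    show ?thesis
    proof (intro conjI exI[of _ x] allI impI)
      show "is_solution_on F {0..} x" using ex .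
      show "x 0 = x0" using x00 .
      fix y assume y: "is_solution_on F {0..} y \<and> y 0 = x0"
      have bnd: "dist (y t) e \<le> sqrt (V x0 / k1 * exp (-\<alpha> * t))" if t: "t \<ge> 0" for t
      proof -
        have s1: "is_solution_on F {0..t} y" using solution_subset[of F "{0..}" y "{0..t}"] y by auto
        have s2: "V (y 0) < k1 * \<rho>^2" using y Vx0' by simp
        have "\<forall>s\<in>{0..t}. V (y s) \<le> V (y 0) * exp (-\<alpha> * s)" by (rule decay[OF s1 s2])
        then have v1: "V (y t) \<le> V (y 0) * exp (-\<alpha> * t)" by (rule bspec) (use t in simp)
        have v2: "V (y t) / k1 \<le> V (y 0) * exp (-\<alpha> * t) / k1" using k1 v1 by (intro divide_right_mono) auto
        have v3: "V (y 0) * exp (-\<alpha> * t) / k1 = V x0 / k1 * exp (-\<alpha> * t)" using y by simp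
        have "(dist (y t) e)^2 \<le> V x0 / k1 * exp (-\<alpha> * t)"
          using distV[of "y t"] v2 v3 by linarith
        then show ?thesis by (rule real_le_rsqrt)
      qed
      have "((\<lambda>t. dist (y t) e) \<longlongrightarrow> 0) at_top"
      proof (rule tendsto_sandwich[of "\<lambda>_. 0" _ _ "\<lambda>t. sqrt (V x0 / k1 * exp (-\<alpha> * t))"])
        show "\<forall>\<^sub>F t in at_top. 0 \<le> dist (y t) e" by simp
        show "\<forall>\<^sub>F t in at_top. dist (y t) e \<le> sqrt (V x0 / k1 * exp (-\<alpha> * t))"
          using eventually_ge_at_top[of "0::real"] by eventually_elim (rule bnd)
        show "((\<lambda>_. 0) \<longlongrightarrow> (0::real)) at_top" by simp
        show "((\<lambda>t. sqrt (V x0 / k1 * exp (-\<alpha> * t))) \<longlongrightarrow> 0) at_top"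
          using tendsto_real_sqrt[OF tendsto_mult_right_zero[OF expdec[OF al], of "V x0 / k1"]] by simp
      qed
      then show "(y \<longlongrightarrow> e) at_top" by (rule tendsto_dist_iff[THEN iffD2])
    qed
  qed
  show ?thesis unfolding locally_asymptotically_stable_def
    using Fe stable d0 attract by blast
qed

lemma V_bounds:
  fixes dA dI dH dC \<gamma> g2 :: real
  assumes "dA > 0" "dI > 0" "dH > 0" "dC > 0" "\<gamma> > 0" "g2 > 0"
  shows "\<exists>k1>0. \<exists>K>0. \<forall>s A I z H C.
    k1 * (s^2 + A^2 + I^2 + z^2 + H^2 + C^2) \<le> dA* A^2 + dI* I^2 + dH* H^2 + dC* C^2 + \<gamma>* ((s+z)^2 + g2* z^2) \<and>
    dA* A^2 + dI* I^2 + dH* H^2 + dC* C^2 + \<gamma>* ((s+z)^2 + g2* z^2) \<le> K * (s^2 + A^2 + I^2 + z^2 + H^2 + C^2)"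
proof -
  define m where "m = min (min dA dI) (min dH dC)"
  define mg where "mg = min 1 g2"
  define k1 where "k1 = min m (\<gamma> * mg / 3)"
  define K where "K = dA + dI + dH + dC + \<gamma> * (2 + g2)"
  have m0: "m > 0" "m \<le> dA" "m \<le> dI" "m \<le> dH" "m \<le> dC" unfolding m_def using assms by auto
  have mg: "mg > 0" "mg \<le> 1" "mg \<le> g2" unfolding mg_def using assms by auto
  have k10: "k1 > 0" "k1 \<le> m" "k1 \<le> \<gamma> * mg / 3" unfolding k1_def using m0 mg assms by auto
  have K0: "K > 0" unfolding K_def using assms by (simp add: add_pos_pos)
  show ?thesis
  proof (rule exI[of _ k1], rule conjI[OF k10(1)], rule exI[of _ K], rule conjI[OF K0], intro allI conjI)
    fix s A I z H C :: real
    define Y where "Y = A^2 + I^2 + H^2 + C^2"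
    have Y0: "Y \<ge> 0" unfolding Y_def by simp
    have dlow: "m * Y \<le> dA* A^2 + dI* I^2 + dH* H^2 + dC* C^2"
    proof -
      have "m* A^2 \<le> dA* A^2" "m* I^2 \<le> dI* I^2" "m* H^2 \<le> dH* H^2" "m* C^2 \<le> dC* C^2"
        using m0 by (intro mult_right_mono; simp)+
      then show ?thesis unfolding Y_def by (simp add: algebra_simps)
    qed
    have dup: "dA* A^2 + dI* I^2 + dH* H^2 + dC* C^2 \<le> (dA + dI + dH + dC) * Y"
    proof -
      have "dA* A^2 \<le> dA* Y" "dI* I^2 \<le> dI* Y" "dH* H^2 \<le> dH* Y" "dC* C^2 \<le> dC* Y"
        unfolding Y_def using assms by (intro mult_left_mono; simp)+
      then show ?thesis by (simp add: algebra_simps)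
    qed
    have sz: "s^2 + z^2 \<le> 3 * ((s+z)^2 + z^2)"
    proof -
      have "0 \<le> (2* s + 3* z)^2 + z^2" by simp
      then show ?thesis by (simp add: power2_eq_square algebra_simps)
    qed
    have glow: "\<gamma> * mg / 3 * (s^2 + z^2) \<le> \<gamma>* ((s+z)^2 + g2* z^2)"
    proof -
      have "\<gamma> * mg / 3 * (s^2 + z^2) \<le> \<gamma> * mg / 3 * (3 * ((s+z)^2 + z^2))"
        using sz assms mg by (intro mult_left_mono) auto
      also have "\<dots> = \<gamma> * (mg * (s+z)^2 + mg * z^2)" by (simp add: algebra_simps)
      also have "\<dots> \<le> \<gamma> * ((s+z)^2 + g2 * z^2)"
      proof -
        have "mg * (s+z)^2 \<le> 1 * (s+z)^2" using mg by (intro mult_right_mono) auto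
        moreover have "mg * z^2 \<le> g2 * z^2" using mg by (intro mult_right_mono) auto
        ultimately show ?thesis using assms by (intro mult_left_mono) auto
      qed
      finally show ?thesis .
    qed
    have gup: "\<gamma>* ((s+z)^2 + g2* z^2) \<le> \<gamma> * (2 + g2) * (s^2 + z^2)"
    proof -
      have "(s+z)^2 \<le> 2* s^2 + 2* z^2"
      proof -
        have "0 \<le> (s - z)^2" by simp
        then show ?thesis by (simp add: power2_eq_square algebra_simps)
      qed
      then have "(s+z)^2 + g2* z^2 \<le> (2 + g2) * (s^2 + z^2)" using assms
        by (simp add: algebra_simps) (smt (verit) mult_nonneg_nonneg zero_le_power2 assms(6))
      then show ?thesis using assms by (simp add: mult.assoc mult_left_mono)
    qed
    have "k1 * (s^2 + A^2 + I^2 + z^2 + H^2 + C^2) = k1 * Y + k1 * (s^2 + z^2)" unfolding Y_def by (simp add: algebra_simps)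
    also have "\<dots> \<le> m * Y + \<gamma> * mg / 3 * (s^2 + z^2)"
      using k10 Y0 by (intro add_mono mult_right_mono) auto
    finally show "k1 * (s^2 + A^2 + I^2 + z^2 + H^2 + C^2) \<le> dA* A^2 + dI* I^2 + dH* H^2 + dC* C^2 + \<gamma>* ((s+z)^2 + g2* z^2)"
      using dlow glow by linarith
    have "dA* A^2 + dI* I^2 + dH* H^2 + dC* C^2 + \<gamma>* ((s+z)^2 + g2* z^2) \<le> (dA + dI + dH + dC) * Y + \<gamma> * (2 + g2) * (s^2 + z^2)"
      using dup gup by linarith
    also have "\<dots> = K * (s^2 + A^2 + I^2 + z^2 + H^2 + C^2) - \<gamma> * (2 + g2) * Y - (dA + dI + dH + dC) * (s^2 + z^2)"
      unfolding K_def Y_def by (simp add: algebra_simps)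
    also have "\<dots> \<le> K * (s^2 + A^2 + I^2 + z^2 + H^2 + C^2)"
    proof -
      have "0 \<le> \<gamma> * (2 + g2) * Y" using assms Y0 by simp
      moreover have "0 \<le> (dA + dI + dH + dC) * (s^2 + z^2)" using assms by simp
      ultimately show ?thesis by linarith
    qed
    finally show "dA* A^2 + dI* I^2 + dH* H^2 + dC* C^2 + \<gamma>* ((s+z)^2 + g2* z^2) \<le> K * (s^2 + A^2 + I^2 + z^2 + H^2 + C^2)" .
  qed
qed

context covid begin

lemma dist_sq: "(dist X (DFE P))^2 = (pS X - S0)^2 + (pA X)^2 + (pI X)^2 + (pQ X - Q0)^2 + (pH X)^2 + (pC X)^2"
  unfolding dist_norm norm_state_sq proj_diff DFE_eq proj_simps by simp

end

context covid begin

lemma stab_core: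
  assumes R: "R0 P < 1"
  shows "\<exists>\<rho>>0. \<exists>\<alpha>>0. \<exists>k1>0. \<exists>K>0. \<exists>V dV. (\<forall>X. k1 * (dist X (DFE P))^2 \<le> V X) \<and> (\<forall>X. V X \<le> K * (dist X (DFE P))^2)
     \<and> continuous_on UNIV V
     \<and> (\<forall>x t Y. (x has_vector_derivative Y) (at t) \<longrightarrow> ((\<lambda>t. V (x t)) has_real_derivative dV (x t) Y) (at t))
     \<and> (\<forall>X. dist X (DFE P) < \<rho> \<longrightarrow> dV X (covid_field P X) \<le> -\<alpha> * V X) \<and> \<rho> \<le> N0/12"
proof -
  note dp = dpos
  have "c0 * (1 + qv / a1 + lh * a6 * qv * a7 / (a1 * chi)) / a0 < 1" using R R0_eq by simp
  then have Rl: "c0 * (1 + qv / a1 + lh * a6 * qv * a7 / (a1 * (a3 * a7 - bb * ek))) < a0"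
    using dp unfolding chi_def by (simp add: divide_less_eq)
  obtain dA dI dH dC \<sigma> where d: "dA > 0" "dI > 0" "dH > 0" "dC > 0" "\<sigma> > 0"
    and quad: "\<forall>A I H C. dA * A * (c0 * (A + I + lh * H) - a0 * A) + dI * I * (qv * A - a1 * I)
       + dH * H * (a6 * I + ek * C - a3 * H) + dC * C * (bb * H - a7 * C) \<le> -\<sigma> * (A^2 + I^2 + H^2 + C^2)"
  proof -
    have lh0: "lh \<ge> 0" using pos(4) by simp
    have chi0: "a3 * a7 - bb * ek > 0" using dp(11) unfolding chi_def .
    show ?thesis using quad_metzler4[OF dp(13) dp(2) dp(3) dp(6) dp(7) dp(8) dp(9) dp(1) lh0 dp(10) chi0 Rl] that by blast
  qed
  have par: "lh \<ge> 0" "mu > 0" "pp \<ge> 0" "a2 > 0" "e1 \<ge> 0" "e2 \<ge> 0" "c0 \<ge> 0" using pos dp by auto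
  obtain \<theta> \<gamma> \<alpha> where th: "\<theta> > 0" and ga: "\<gamma> > 0" and al: "\<alpha> > 0"
    and ineq: "\<forall>A I H C u z cc. \<bar>cc - c0\<bar> \<le> \<theta> \<longrightarrow>
      2 * (dA * A * (cc * (A + I + lh * H) - a0 * A) + dI * I * (qv * A - a1 * I) + dH * H * (a6 * I + ek * C - a3 * H)
        + dC * C * (bb * H - a7 * C))
      + \<gamma> * (2 * u * (-mu * u - cc * (A + I + lh * H) + e1 * I + e2 * H)
          + 2 * (mu / (pp + mu)) * z * (pp * (u - z) - a2 * z + e1 * I + e2 * H))
      \<le> -\<alpha> * (dA * A^2 + dI * I^2 + dH * H^2 + dC * C^2 + \<gamma> * (u^2 + (mu / (pp + mu)) * z^2))"
    using lyap_ineq[OF d par quad[rule_format]] by blast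
  define g2 where "g2 = mu / (pp + mu)"
  have g2: "g2 > 0" unfolding g2_def using pos dp by (simp add: add_nonneg_pos)
  define \<rho> where "\<rho> = min (min (N0/12) (S0/2)) (\<theta> * N0 / (14 * bet + 1))"
  have rho1: "\<rho> > 0" unfolding \<rho>_def using dp th pos by auto
  have rho2: "\<rho> \<le> N0/12" "\<rho> \<le> S0/2" "\<rho> \<le> \<theta> * N0 / (14 * bet + 1)" unfolding \<rho>_def
    by (rule min.coboundedI1, rule min.cobounded1, rule min.coboundedI1, rule min.cobounded2, rule min.cobounded2)
  note rho = rho1 rho2
  have ccb: "\<bar>cc X - c0\<bar> \<le> \<theta>" if X: "dist X (DFE P) < \<rho>" for X
  proof -
    have "\<bar>cc X - c0\<bar> \<le> bet * (1 - pr) * (14 * \<rho> / N0)"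
      using X rho by (intro cc_bound) auto
    also have "\<dots> \<le> bet * (14 * \<rho> / N0)"
      using pos rho dp by (intro mult_right_mono) auto
    also have "\<dots> \<le> bet * (14 * (\<theta> * N0 / (14 * bet + 1)) / N0)"
      using pos rho dp by (intro mult_left_mono divide_right_mono) auto
    also have "\<dots> = \<theta> * (14 * bet / (14 * bet + 1))"
    proof -
      have hlp: "bet * (14 * (\<theta> * N0 / D) / N0) = \<theta> * (14 * bet / D)" if "D > 0" for D
        using dp that by (simp add: field_simps)
      show ?thesis by (rule hlp) (use pos in simp)
    qed
    also have "\<dots> \<le> \<theta> * 1" using th pos by (intro mult_left_mono) auto
    finally show ?thesis by simp
  qed
  define V where "V X = dA * (pA X)^2 + dI * (pI X)^2 + dH * (pH X)^2 + dC * (pC X)^2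
      + \<gamma> * ((pS X - S0 + (pQ X - Q0))^2 + g2 * (pQ X - Q0)^2)" for X
  define dV where "dV X Y = 2 * (dA * pA X * pA Y + dI * pI X * pI Y + dH * pH X * pH Y + dC * pC X * pC Y)
      + \<gamma> * (2 * (pS X - S0 + (pQ X - Q0)) * (pS Y + pQ Y) + g2 * (2 * (pQ X - Q0) * pQ Y))" for X Y
  obtain k1 K where k1: "k1 > 0" and K: "K > 0" and VB: "\<forall>s A I z H C.
    k1 * (s^2 + A^2 + I^2 + z^2 + H^2 + C^2) \<le> dA*A^2 + dI*I^2 + dH*H^2 + dC*C^2 + \<gamma>*((s+z)^2 + g2*z^2) \<and>
    dA*A^2 + dI*I^2 + dH*H^2 + dC*C^2 + \<gamma>*((s+z)^2 + g2*z^2) \<le> K * (s^2 + A^2 + I^2 + z^2 + H^2 + C^2)"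
    using V_bounds[OF d(1-4) ga g2] by blast
  have Vlow: "k1 * (dist X (DFE P))^2 \<le> V X" for X
    using VB[rule_format, of "pS X - S0" "pA X" "pI X" "pQ X - Q0" "pH X" "pC X"]
    unfolding dist_sq V_def by (simp add: algebra_simps)
  have Vup: "V X \<le> K * (dist X (DFE P))^2" for X
    using VB[rule_format, of "pS X - S0" "pA X" "pI X" "pQ X - Q0" "pH X" "pC X"]
    unfolding dist_sq V_def by (simp add: algebra_simps)
  have Vc: "continuous_on UNIV V"
    unfolding V_def pS_def pA_def pI_def pQ_def pH_def pC_def by (intro continuous_intros)
  have Vd: "((\<lambda>t. V (x t)) has_real_derivative dV (x t) Y) (at t)"
    if h: "(x has_vector_derivative Y) (at t)" for x t Y
  proof -
    note hp = hvd_proj[OF h]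
    show ?thesis unfolding V_def dV_def
      by (rule derivative_eq_intros hp | simp)+ (simp add: algebra_simps)
  qed
  have dec: "dV X (covid_field P X) \<le> -\<alpha> * V X" if X: "dist X (DFE P) < \<rho>" for X
  proof -
    let ?F = "covid_field P X"
    have FA: "pA ?F = cc X * hh X - a0 * pA X" "pI ?F = qv * pA X - a1 * pI X"
      "pH ?F = a6 * pI X + ek * pC X - a3 * pH X" "pC ?F = bb * pH X - a7 * pC X"
      unfolding field_eq by simp_all
    have Fq: "pQ ?F = pp * ((pS X - S0 + (pQ X - Q0)) - (pQ X - Q0)) - a2 * (pQ X - Q0) + e1 * pI X + e2 * pH X"
    proof -
      have "pQ ?F = pp * pS X + e1 * pI X + e2 * pH X - a2 * pQ X" unfolding field_eq by simp
      moreover have "pp * ((pS X - S0 + (pQ X - Q0)) - (pQ X - Q0)) - a2 * (pQ X - Q0)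
          = pp * pS X - pp * S0 - a2 * pQ X + a2 * Q0" by (simp add: algebra_simps)
      ultimately show ?thesis using ppS0 by linarith
    qed
    have Fs: "pS ?F + pQ ?F = -mu * (pS X - S0 + (pQ X - Q0)) - cc X * (pA X + pI X + lh * pH X) + e1 * pI X + e2 * pH X"
    proof -
      have "pS ?F + pQ ?F = Lam + om * mr * pQ X - (pp + mu) * pS X - cc X * hh X
          + (pp * pS X + e1 * pI X + e2 * pH X - a2 * pQ X)" unfolding field_eq by simp
      moreover have "a2 * pQ X = om * mr * pQ X + mu * pQ X" unfolding a2_def by (simp add: algebra_simps)
      moreover have "(pp + mu) * pS X = pp * pS X + mu * pS X" by (simp add: algebra_simps)
      moreover have "-mu * (pS X - S0 + (pQ X - Q0)) = - mu * pS X + mu * S0 - mu * pQ X + mu * Q0"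
        by (simp add: algebra_simps)
      ultimately show ?thesis using Lam_eq unfolding hh_def by linarith
    qed
    have "dV X ?F = 2 * (dA * pA X * (cc X * (pA X + pI X + lh * pH X) - a0 * pA X) + dI * pI X * (qv * pA X - a1 * pI X)
        + dH * pH X * (a6 * pI X + ek * pC X - a3 * pH X) + dC * pC X * (bb * pH X - a7 * pC X))
      + \<gamma> * (2 * (pS X - S0 + (pQ X - Q0)) * (-mu * (pS X - S0 + (pQ X - Q0)) - cc X * (pA X + pI X + lh * pH X) + e1 * pI X + e2 * pH X)
          + 2 * g2 * (pQ X - Q0) * (pp * ((pS X - S0 + (pQ X - Q0)) - (pQ X - Q0)) - a2 * (pQ X - Q0) + e1 * pI X + e2 * pH X))"
      unfolding dV_def Fs FA Fq[symmetric] hh_def by (simp add: algebra_simps)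
    also have "\<dots> \<le> -\<alpha> * (dA * (pA X)^2 + dI * (pI X)^2 + dH * (pH X)^2 + dC * (pC X)^2
        + \<gamma> * ((pS X - S0 + (pQ X - Q0))^2 + g2 * (pQ X - Q0)^2))"
      using ineq[folded g2_def] ccb[OF X] by blast
    also have "\<dots> = -\<alpha> * V X" unfolding V_def by simp
    finally show ?thesis .
  qed
  show ?thesis
    apply (rule exI[of _ \<rho>], rule conjI[OF rho(1)], rule exI[of _ \<alpha>], rule conjI[OF al])
    apply (rule exI[of _ k1], rule conjI[OF k1], rule exI[of _ K], rule conjI[OF K])
    apply (rule exI[of _ V], rule exI[of _ dV])
    apply (intro conjI allI impI)
    subgoal for X by (rule Vlow)
    subgoal for X by (rule Vup)
    subgoal by (rule Vc)
    subgoal for x t Y by (rule Vd)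
    subgoal for X by (rule dec)
    subgoal by (rule rho(2))
    done
qed

end

lemma u_vector:
  fixes c0 lh a0 a1 a3 a6 ek a7 qv bb :: real
  assumes pos: "c0 > 0" "lh > 0" "a0 > 0" "a1 > 0" "a3 > 0" "a6 \<ge> 0" "ek \<ge> 0" "a7 > 0" "qv \<ge> 0" "bb \<ge> 0"
    and chi: "a3 * a7 - bb * ek > 0"
    and R: "c0 * (1 + qv / a1 + lh * a6 * qv * a7 / (a1 * (a3 * a7 - bb * ek))) > a0"
  shows "\<exists>r uI uH uC. r > 0 \<and> uI > 0 \<and> uH > 0 \<and> uC \<ge> 0 \<and> c0 - a0 + qv * uI - r > 0 \<and>
    (\<forall>A I H C cc. (cc * (A + I + lh * H) - a0 * A) + uI * (qv * A - a1 * I) + uH * (a6 * I + ek * C - a3 * H)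
        + uC * (bb * H - a7 * C)
      = (c0 - a0 + qv * uI) * A + r * (uI * I + uH * H + uC * C) + (cc - c0) * (A + I + lh * H))"
proof -
  define den where "den r = (a3 + r) * (a7 + r) - bb * ek" for r
  define uH where "uH r = c0 * lh * (a7 + r) / den r" for r
  define uC where "uC r = ek * uH r / (a7 + r)" for r
  define uI where "uI r = (c0 + a6 * uH r) / (a1 + r)" for r
  define g where "g r = c0 - a0 + qv * uI r - r" for r
  have den0: "den 0 = a3 * a7 - bb * ek" unfolding den_def by simp
  have denpos: "den r > 0" if "r \<ge> 0" for r
  proof -
    have "den r = (a3 * a7 - bb * ek) + r * (a3 + a7) + r * r" unfolding den_def by (simp add: algebra_simps)
    moreover have "r * (a3 + a7) \<ge> 0" "r * r \<ge> 0" using that pos by simp_all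
    ultimately show ?thesis using chi by linarith
  qed
  have g0: "g 0 > 0"
  proof -
    have "g 0 = c0 - a0 + qv * ((c0 + a6 * (c0 * lh * a7 / (a3 * a7 - bb * ek))) / a1)"
      unfolding g_def uI_def uH_def den0 by simp
    also have "\<dots> = c0 * (1 + qv / a1 + lh * a6 * qv * a7 / (a1 * (a3 * a7 - bb * ek))) - a0"
      using pos chi by (simp add: field_simps)
    finally show ?thesis using R by simp
  qed
  have "continuous (at 0) g"
    unfolding g_def uI_def uC_def uH_def den_def
    using pos chi by (intro continuous_intros) auto
  then have "(g \<longlongrightarrow> g 0) (at_right 0)" by (simp add: continuous_at filterlim_at_split)
  then have "\<forall>\<^sub>F r in at_right 0. g r > 0" using g0 by (rule order_tendstoD(1))
  then obtain b where b: "b > 0" "\<And>r. 0 < r \<Longrightarrow> r < b \<Longrightarrow> g r > 0"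
    unfolding eventually_at_right_field by auto
  define r where "r = b / 2"
  have r: "r > 0" "g r > 0" unfolding r_def using b by auto
  have dr: "den r > 0" using denpos r by simp
  have uH: "uH r > 0" unfolding uH_def using pos r dr by simp
  have uC: "uC r \<ge> 0" unfolding uC_def using pos r uH by simp
  have uI: "uI r > 0" unfolding uI_def using pos r uH by (simp add: add_pos_nonneg)
  have R1: "uI r * (a1 + r) = c0 + a6 * uH r" unfolding uI_def using pos r by simp
  have R2: "uH r * den r = c0 * lh * (a7 + r)" unfolding uH_def using dr by simp
  have R3: "uC r * (a7 + r) = ek * uH r" unfolding uC_def using pos r by simp
  have cH: "c0 * lh - uH r * (a3 + r) + bb * uC r = 0"
  proof -
    have "(a7 + r) * (c0 * lh - uH r * (a3 + r) + bb * uC r) = 0"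
      using R2 R3 unfolding den_def by algebra
    then show ?thesis using pos r by simp
  qed
  show ?thesis
  proof (rule exI[of _ r], rule exI[of _ "uI r"], rule exI[of _ "uH r"], rule exI[of _ "uC r"], intro conjI allI r(1) uI uH uC)
    show "c0 - a0 + qv * uI r - r > 0" using r(2) unfolding g_def by simp
    fix A I H C cc :: real
    have "(cc * (A + I + lh * H) - a0 * A) + uI r * (qv * A - a1 * I) + uH r * (a6 * I + ek * C - a3 * H)
        + uC r * (bb * H - a7 * C)
      - ((c0 - a0 + qv * uI r) * A + r * (uI r * I + uH r * H + uC r * C) + (cc - c0) * (A + I + lh * H))
      = I * (c0 + a6 * uH r - uI r * (a1 + r)) + H * (c0 * lh - uH r * (a3 + r) + bb * uC r)
        + C * (ek * uH r - uC r * (a7 + r))"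
      by (simp add: algebra_simps)
    also have "\<dots> = 0" using R1 R3 cH by simp
    finally show "(cc * (A + I + lh * H) - a0 * A) + uI r * (qv * A - a1 * I) + uH r * (a6 * I + ek * C - a3 * H)
        + uC r * (bb * H - a7 * C)
      = (c0 - a0 + qv * uI r) * A + r * (uI r * I + uH r * H + uC r * C) + (cc - c0) * (A + I + lh * H)"
      by simp
  qed
qed

context covid begin

lemma proj_cont: "continuous_on S pS" "continuous_on S pA" "continuous_on S pI"
  "continuous_on S pQ" "continuous_on S pH" "continuous_on S pC"
  unfolding pS_def pA_def pI_def pQ_def pH_def pC_def by (intro continuous_intros)+

lemma cc_small:
  assumes th: "\<theta> > 0" and X: "dist X (DFE P) \<le> min (min (N0/12) (S0/2)) (\<theta> * N0 / (14 * bet + 1))"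
  shows "\<bar>cc X - c0\<bar> \<le> \<theta>" "cc X \<ge> 0"
proof -
  note dp = dpos
  define \<rho> where "\<rho> = min (min (N0/12) (S0/2)) (\<theta> * N0 / (14 * bet + 1))"
  have rho2: "\<rho> \<le> N0/12" "\<rho> \<le> S0/2" "\<rho> \<le> \<theta> * N0 / (14 * bet + 1)" unfolding \<rho>_def
    by (rule min.coboundedI1, rule min.cobounded1, rule min.coboundedI1, rule min.cobounded2, rule min.cobounded2)
  have X': "dist X (DFE P) \<le> \<rho>" using X unfolding \<rho>_def .
  have r0: "\<rho> \<ge> 0" using X' zero_le_dist order_trans by blast
  show "cc X \<ge> 0" using X' rho2 by (intro cc_bound(2)) auto
  have "\<bar>cc X - c0\<bar> \<le> bet * (1 - pr) * (14 * \<rho> / N0)"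
    using X' rho2 by (intro cc_bound(3)) auto
  also have "\<dots> \<le> bet * (14 * \<rho> / N0)"
    using pos r0 dp by (intro mult_right_mono) auto
  also have "\<dots> \<le> bet * (14 * (\<theta> * N0 / (14 * bet + 1)) / N0)"
    using pos rho2 dp by (intro mult_left_mono divide_right_mono) auto
  also have "\<dots> = \<theta> * (14 * bet / (14 * bet + 1))"
  proof -
    have hlp: "bet * (14 * (\<theta> * N0 / D) / N0) = \<theta> * (14 * bet / D)" if "D > 0" for D
      using dp that by (simp add: field_simps)
    show ?thesis by (rule hlp) (use pos in simp)
  qed
  also have "\<dots> \<le> \<theta> * 1" using th pos by (intro mult_left_mono) auto
  finally show "\<bar>cc X - c0\<bar> \<le> \<theta>" by simp
qed

theorem unstable:
  assumes R: "R0 P > 1"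
  shows "unstable_equilibrium (covid_field P) (DFE P)"
proof -
  note dp = dpos
  have "1 < c0 * (1 + qv / a1 + lh * a6 * qv * a7 / (a1 * chi)) / a0" using R R0_eq by simp
  then have Rl: "c0 * (1 + qv / a1 + lh * a6 * qv * a7 / (a1 * (a3 * a7 - bb * ek))) > a0"
    using dp unfolding chi_def by (simp add: less_divide_eq)
  have c0p: "c0 > 0"
  proof (rule ccontr)
    assume "\<not> c0 > 0" then have "c0 = 0" using dp by simp
    then show False using Rl dp by simp
  qed
  have lh0: "lh > 0" using pos by simp
  have chi0: "a3 * a7 - bb * ek > 0" using dp(11) unfolding chi_def .
  obtain r uI uH uC where r: "r > 0" and uI: "uI > 0" and uH: "uH > 0" and uC: "uC \<ge> 0"
    and gpos: "c0 - a0 + qv * uI - r > 0"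
    and ident: "\<forall>A I H C cc. (cc * (A + I + lh * H) - a0 * A) + uI * (qv * A - a1 * I) + uH * (a6 * I + ek * C - a3 * H)
        + uC * (bb * H - a7 * C)
      = (c0 - a0 + qv * uI) * A + r * (uI * I + uH * H + uC * C) + (cc - c0) * (A + I + lh * H)"
    using u_vector[OF c0p lh0 dp(2) dp(3) dp(6) dp(7) dp(8) dp(9) dp(1) dp(10) chi0 Rl] by blast
  define KK where "KK = 1 + 1 / uI + lh / uH"
  have KK: "KK > 0" unfolding KK_def using uI uH lh0 by (simp add: add_pos_nonneg)
  define \<theta> where "\<theta> = r / (2 * KK)"
  have th: "\<theta> > 0" unfolding \<theta>_def using r KK by simp
  have thK: "\<theta> * KK = r / 2" unfolding \<theta>_def using KK by simp
  define \<rho> where "\<rho> = min (min (N0/12) (S0/2)) (\<theta> * N0 / (14 * bet + 1))"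
  have rho1: "\<rho> > 0" unfolding \<rho>_def using dp th pos by auto
  have rho2: "\<rho> \<le> N0/12" unfolding \<rho>_def by (rule min.coboundedI1, rule min.cobounded1)
  define \<epsilon> where "\<epsilon> = \<rho> / 2"
  have ep: "\<epsilon> > 0" "\<epsilon> \<le> N0/12" "\<epsilon> \<le> \<rho>" unfolding \<epsilon>_def using rho1 rho2 by auto
  have ccs: "\<bar>cc X - c0\<bar> \<le> \<theta>" "cc X \<ge> 0" if "dist X (DFE P) \<le> \<epsilon>" for X
    using cc_small[OF th, of X] that ep unfolding \<rho>_def by auto
  obtain G L B where lipG: "\<forall>x y. norm (G x - G y) \<le> L * norm (x - y)" and L: "L > 0"
    and bG: "\<forall>x. norm (G x) \<le> B" and GF: "\<forall>X. dist X (DFE P) \<le> \<epsilon> \<longrightarrow> G X = covid_field P X"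
    using G_exists[OF ep(1) ep(2)] by blast
  show ?thesis unfolding unstable_equilibrium_def
  proof (intro conjI notI equilibrium)
    assume ls: "lyapunov_stable (covid_field P) (DFE P)"
    obtain \<delta> where d0: "\<delta> > 0" and ls': "\<forall>T\<ge>0. \<forall>x. is_solution_on (covid_field P) {0..T} x \<and> dist (x 0) (DFE P) < \<delta>
        \<longrightarrow> (\<forall>t\<in>{0..T}. dist (x t) (DFE P) < \<epsilon>)"
      using ls ep(1) unfolding lyapunov_stable_def by blast
    define \<eta> where "\<eta> = min \<delta> \<epsilon> / 4"
    have eta: "\<eta> > 0" "2 * \<eta> < \<delta>" "2 * \<eta> < \<epsilon>" unfolding \<eta>_def using d0 ep by auto
    define x0 where "x0 = (S0, \<eta>, \<eta>, Q0, \<eta>, \<eta>)"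
    have dx0: "dist x0 (DFE P) = 2 * \<eta>"
    proof -
      have "(dist x0 (DFE P))^2 = (2 * \<eta>)^2" unfolding dist_sq x0_def by (simp add: power2_eq_square)
      then show ?thesis using eta by (intro power2_eq_imp_eq[OF _ zero_le_dist]) auto
    qed
    obtain x where x00: "x 0 = x0" and xd: "\<forall>t\<ge>0. (x has_vector_derivative G (x t)) (at t within {0..})"
      using picard_exists[OF lipG[rule_format] L bG[rule_format], of x0] by blast
    have solG: "is_solution_on G {0..T} x" for T
      unfolding is_solution_on_def
    proof
      fix t assume "t \<in> {0..T}"
      then have t: "t \<ge> 0" by simp
      show "(x has_vector_derivative G (x t)) (at t within {0..T})"
        by (rule has_vector_derivative_within_subset[OF xd[rule_format, OF t]]) auto
    qed
    have xc: "continuous_on {0..T} x" for T by (rule solution_continuous[OF solG])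
    have dc: "continuous_on {0..T} (\<lambda>t. dist (x t) (DFE P))" for T
      by (intro continuous_intros xc)
    have inball: "dist (x t) (DFE P) < \<epsilon>" if t: "t \<ge> 0" for t
    proof (rule ccontr)
      assume "\<not> dist (x t) (DFE P) < \<epsilon>"
      then have "\<epsilon> \<le> dist (x t) (DFE P)" by simp
      then have "\<exists>\<tau>\<in>{0..t}. dist (x \<tau>) (DFE P) = \<epsilon> \<and> (\<forall>s\<in>{0..<\<tau>}. dist (x s) (DFE P) < \<epsilon>) \<and> 0 < \<tau>"
        using t x00 dx0 eta by (intro first_hit dc) auto
      then obtain \<tau> where \<tau>: "\<tau> \<in> {0..t}" "dist (x \<tau>) (DFE P) = \<epsilon>" "\<forall>s\<in>{0..<\<tau>}. dist (x s) (DFE P) < \<epsilon>"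
        by blast
      have solF: "is_solution_on (covid_field P) {0..\<tau>} x"
        unfolding is_solution_on_def
      proof
        fix s assume s: "s \<in> {0..\<tau>}"
        have "dist (x s) (DFE P) \<le> \<epsilon>"
        proof (cases "s = \<tau>")
          case True then show ?thesis using \<tau> by simp
        next
          case False
          then have "s \<in> {0..<\<tau>}" using s by auto
          then have "dist (x s) (DFE P) < \<epsilon>" using \<tau>(3) by blast
          then show ?thesis by simp
        qed
        then have "G (x s) = covid_field P (x s)" using GF by blast
        moreover have "(x has_vector_derivative G (x s)) (at s within {0..\<tau>})"
          using solG[of \<tau>] s unfolding is_solution_on_def by blast
        ultimately show "(x has_vector_derivative covid_field P (x s)) (at s within {0..\<tau>})" by simp
      qed
      have "dist (x 0) (DFE P) < \<delta>" using x00 dx0 eta by simp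
      then have "\<forall>s\<in>{0..\<tau>}. dist (x s) (DFE P) < \<epsilon>" using ls' solF \<tau>(1) by auto
      then show False using \<tau> by auto
    qed
    have solF: "is_solution_on (covid_field P) {0..T} x" for T
      unfolding is_solution_on_def
    proof
      fix s assume s: "s \<in> {0..T}"
      have "dist (x s) (DFE P) \<le> \<epsilon>" using inball[of s] s by auto
      then have "G (x s) = covid_field P (x s)" using GF by blast
      moreover have "(x has_vector_derivative G (x s)) (at s within {0..T})"
        using solG[of T] s unfolding is_solution_on_def by blast
      ultimately show "(x has_vector_derivative covid_field P (x s)) (at s within {0..T})" by simp
    qed
    have dxs: "(x has_vector_derivative covid_field P (x s)) (at s)" if "s > 0" for s
      using solution_interior[OF solF[of "s + 1"]] that by simp
    note hp = hvd_proj[OF dxs]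
    have ccx: "\<bar>cc (x s) - c0\<bar> \<le> \<theta>" "cc (x s) \<ge> 0" if "s \<ge> 0" for s
      using ccs inball[OF that] by auto
    have pcont: "continuous_on {0..T} (\<lambda>t. p (x t))" if "continuous_on UNIV p" for p :: "state \<Rightarrow> real" and T
      by (rule continuous_on_compose2[OF that xc]) auto
    define m where "m t = min (min (pA (x t)) (pI (x t))) (min (pH (x t)) (pC (x t)))" for t
    have mc: "continuous_on {0..T} m" for T
      unfolding m_def by (intro continuous_intros pcont proj_cont)
    have m0: "m 0 = \<eta>" unfolding m_def x00 x0_def by simp
    have mpos: "m t > 0" if t: "t \<ge> 0" for t
    proof (rule ccontr)
      assume "\<not> m t > 0"
      then have "0 \<le> - m t" by simp
      then have "\<exists>\<tau>\<in>{0..t}. - m \<tau> = 0 \<and> (\<forall>s\<in>{0..<\<tau>}. - m s < 0) \<and> 0 < \<tau>"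
        using t m0 eta by (intro first_hit continuous_intros mc) auto
      then obtain \<tau> where \<tau>: "\<tau> \<in> {0..t}" "m \<tau> = 0" "\<forall>s\<in>{0..<\<tau>}. m s > 0" "0 < \<tau>" by auto
      have pos_s: "pA (x s) > 0" "pI (x s) > 0" "pH (x s) > 0" "pC (x s) > 0" if "s \<in> {0..<\<tau>}" for s
        using \<tau>(3) that unfolding m_def by auto
      have grow: "p (x \<tau>) \<ge> p (x 0) * exp (-k * (\<tau> - 0))"
        if pc: "continuous_on UNIV p" and pd: "\<And>s. 0 < s \<Longrightarrow> s < \<tau> \<Longrightarrow> ((\<lambda>t. p (x t)) has_real_derivative p (covid_field P (x s))) (at s)"
          and pk: "\<And>s. 0 < s \<Longrightarrow> s < \<tau> \<Longrightarrow> p (covid_field P (x s)) \<ge> -k * p (x s)"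
        for p :: "state \<Rightarrow> real" and k
      proof (rule exp_growth)
        show "0 \<le> \<tau>" using \<tau> by simp
        show "continuous_on {0..\<tau>} (\<lambda>t. p (x t))" by (rule pcont[OF pc])
        fix s assume "0 < s" "s < \<tau>"
        then show "\<exists>d. ((\<lambda>t. p (x t)) has_real_derivative d) (at s) \<and> d \<ge> -k * p (x s)"
          using pd pk by blast
      qed
      have hhs: "hh (x s) \<ge> 0" if "s \<in> {0..<\<tau>}" for s
        using pos_s[OF that] pos unfolding hh_def by (simp add: add_pos_pos)
      have gA: "pA (x \<tau>) \<ge> pA (x 0) * exp (-a0 * (\<tau> - 0))"
      proof (rule grow)
        fix s assume s: "0 < s" "s < \<tau>"
        have "cc (x s) * hh (x s) \<ge> 0" using ccx[of s] hhs[of s] s by simp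
        then show "pA (covid_field P (x s)) \<ge> -a0 * pA (x s)" unfolding field_eq by simp
      qed (use hp proj_cont in auto)
      have gI: "pI (x \<tau>) \<ge> pI (x 0) * exp (-a1 * (\<tau> - 0))"
      proof (rule grow)
        fix s assume s: "0 < s" "s < \<tau>"
        have "qv * pA (x s) \<ge> 0" using pos_s[of s] s dp by simp
        then show "pI (covid_field P (x s)) \<ge> -a1 * pI (x s)" unfolding field_eq by simp
      qed (use hp proj_cont in auto)
      have gH: "pH (x \<tau>) \<ge> pH (x 0) * exp (-a3 * (\<tau> - 0))"
      proof (rule grow)
        fix s assume s: "0 < s" "s < \<tau>"
        have "a6 * pI (x s) \<ge> 0" "ek * pC (x s) \<ge> 0" using pos_s[of s] s dp by simp_all
        then show "pH (covid_field P (x s)) \<ge> -a3 * pH (x s)" unfolding field_eq by simp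
      qed (use hp proj_cont in auto)
      have gC: "pC (x \<tau>) \<ge> pC (x 0) * exp (-a7 * (\<tau> - 0))"
      proof (rule grow)
        fix s assume s: "0 < s" "s < \<tau>"
        have "bb * pH (x s) \<ge> 0" using pos_s[of s] s dp by simp
        then show "pC (covid_field P (x s)) \<ge> -a7 * pC (x s)" unfolding field_eq by simp
      qed (use hp proj_cont in auto)
      have "pA (x 0) = \<eta>" "pI (x 0) = \<eta>" "pH (x 0) = \<eta>" "pC (x 0) = \<eta>" unfolding x00 x0_def by simp_all
      then have "pA (x \<tau>) > 0" "pI (x \<tau>) > 0" "pH (x \<tau>) > 0" "pC (x \<tau>) > 0"
        using gA gI gH gC eta by (smt (verit) exp_gt_zero mult_pos_pos)+
      then have "m \<tau> > 0" unfolding m_def by simp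
      then show False using \<tau> by simp
    qed
    have posx: "pA (x t) > 0" "pI (x t) > 0" "pH (x t) > 0" "pC (x t) > 0" if "t \<ge> 0" for t
      using mpos[OF that] unfolding m_def by auto
    define W where "W t = pA (x t) + uI * pI (x t) + uH * pH (x t) + uC * pC (x t)" for t
    have Wc: "continuous_on {0..T} W" for T unfolding W_def by (intro continuous_intros pcont proj_cont)
    have Wd: "\<exists>d. (W has_real_derivative d) (at s) \<and> d \<ge> (r/2) * W s" if s: "s > 0" for s
    proof -
      let ?X = "x s"
      let ?F = "covid_field P ?X"
      have "(W has_real_derivative (pA ?F + uI * pI ?F + uH * pH ?F + uC * pC ?F)) (at s)"
        unfolding W_def using hp[OF s] by (auto intro!: derivative_eq_intros)
      moreover have "pA ?F + uI * pI ?F + uH * pH ?F + uC * pC ?F \<ge> (r/2) * W s"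
      proof -
        define A where "A = pA ?X"
        define I where "I = pI ?X"
        define H where "H = pH ?X"
        define C where "C = pC ?X"
        define h where "h = A + I + lh * H"
        have p: "A > 0" "I > 0" "H > 0" "C > 0" unfolding A_def I_def H_def C_def using posx s by auto
        have "pA ?F + uI * pI ?F + uH * pH ?F + uC * pC ?F
            = (cc ?X * (A + I + lh * H) - a0 * A) + uI * (qv * A - a1 * I) + uH * (a6 * I + ek * C - a3 * H)
              + uC * (bb * H - a7 * C)"
          unfolding field_eq A_def I_def H_def C_def hh_def by simp
        also have "\<dots> = (c0 - a0 + qv * uI) * A + r * (uI * I + uH * H + uC * C) + (cc ?X - c0) * h"
          unfolding h_def using ident by blast
        finally have eq: "pA ?F + uI * pI ?F + uH * pH ?F + uC * pC ?F
            = (c0 - a0 + qv * uI) * A + r * (uI * I + uH * H + uC * C) + (cc ?X - c0) * h" .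
        have Ws: "W s = A + uI * I + uH * H + uC * C" unfolding W_def A_def I_def H_def C_def by simp
        have t1: "(c0 - a0 + qv * uI) * A \<ge> r * A" using gpos p by (intro mult_right_mono) auto
        have h0: "h \<ge> 0" unfolding h_def using p lh0 by simp
        have t2: "(cc ?X - c0) * h \<ge> - (\<theta> * h)"
        proof -
          have "\<bar>(cc ?X - c0) * h\<bar> \<le> \<theta> * h" using ccx[of s] s h0 by (simp add: abs_mult mult_right_mono)
          then show ?thesis by linarith
        qed
        have hW: "h \<le> KK * W s"
        proof -
          have uIC: "uC * C \<ge> 0" using uC p by simp
          have "A \<le> W s" using Ws p uI uH uIC by (smt (verit) mult_pos_pos)
          moreover have "I \<le> W s / uI"
          proof -
            have "uI * I \<le> W s" using Ws p uI uH uIC by (smt (verit) mult_pos_pos)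
            then show ?thesis using uI by (simp add: field_simps)
          qed
          moreover have "lh * H \<le> lh * (W s / uH)"
          proof -
            have "uH * H \<le> W s" using Ws p uI uH uIC by (smt (verit) mult_pos_pos)
            then have "H \<le> W s / uH" using uH by (simp add: field_simps)
            then show ?thesis using lh0 by (intro mult_left_mono) auto
          qed
          ultimately have "h \<le> W s + W s / uI + lh * (W s / uH)" unfolding h_def by linarith
          also have "\<dots> = KK * W s" unfolding KK_def by (simp add: algebra_simps)
          finally show ?thesis .
        qed
        have "\<theta> * h \<le> \<theta> * (KK * W s)" using hW th by (intro mult_left_mono) auto
        also have "\<dots> = (r/2) * W s" using thK by (simp add: mult.assoc[symmetric])
        finally have t3: "\<theta> * h \<le> (r/2) * W s" .
        have "r * W s = r * A + r * (uI * I + uH * H + uC * C)" unfolding Ws by (simp add: algebra_simps)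
        then show ?thesis unfolding eq using t1 t2 t3 by linarith
      qed
      ultimately show ?thesis by blast
    qed
    have Wgrow: "W t \<ge> W 0 * exp (r/2 * (t - 0))" if t: "t \<ge> 0" for t
      by (rule exp_growth[OF t Wc]) (use Wd in auto)
    have W0: "W 0 = \<eta> * (1 + uI + uH + uC)" unfolding W_def x00 x0_def by (simp add: algebra_simps)
    define Wm where "Wm = (1 + uI + uH + uC) * \<epsilon>"
    have Wb: "W t < Wm" if t: "t \<ge> 0" for t
    proof -
      have db: "dist (x t) (DFE P) \<le> dist (x t) (DFE P)" by simp
      note cb = comp_bounds[OF db]
      have d: "dist (x t) (DFE P) < \<epsilon>" using inball[OF t] .
      have "pA (x t) < \<epsilon>" "pI (x t) < \<epsilon>" "pH (x t) < \<epsilon>" "pC (x t) < \<epsilon>"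
        using cb d by linarith+
      then have "pA (x t) + uI * pI (x t) + uH * pH (x t) + uC * pC (x t) < \<epsilon> + uI * \<epsilon> + uH * \<epsilon> + uC * \<epsilon>"
        using uI uH uC by (smt (verit) mult_left_mono mult_strict_left_mono)
      then show ?thesis unfolding W_def Wm_def by (simp add: algebra_simps)
    qed
    have W0p: "W 0 > 0" unfolding W0 using eta uI uH uC by simp
    have Wm0: "Wm > 0" unfolding Wm_def using ep uI uH uC by simp
    define t where "t = 2 * (Wm / W 0) / r"
    have t0: "t \<ge> 0" unfolding t_def using W0p Wm0 r by simp
    have "exp (r/2 * t) \<ge> 1 + r/2 * t" by (rule exp_ge_add_one_self)
    moreover have "r/2 * t = Wm / W 0" unfolding t_def using r by simp
    ultimately have "exp (r/2 * (t - 0)) \<ge> 1 + Wm / W 0" by simp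
    then have "W 0 * exp (r/2 * (t - 0)) \<ge> W 0 * (1 + Wm / W 0)" using W0p by (intro mult_left_mono) auto
    also have "W 0 * (1 + Wm / W 0) = W 0 + Wm" using W0p by (simp add: field_simps)
    finally have "W t \<ge> W 0 + Wm" using Wgrow[OF t0] by linarith
    then show False using Wb[OF t0] W0p by linarith
  qed
qed

theorem stable:
  assumes R: "R0 P < 1"
  shows "locally_asymptotically_stable (covid_field P) (DFE P)"
proof -
  obtain \<rho> \<alpha> k1 K V dV where rho: "\<rho> > 0" and al: "\<alpha> > 0" and k1: "k1 > 0" and K: "K > 0"
    and Vlow: "\<forall>X. k1 * (dist X (DFE P))^2 \<le> V X" and Vup: "\<forall>X. V X \<le> K * (dist X (DFE P))^2"
    and Vc: "continuous_on UNIV V"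
    and Vd: "\<forall>x t Y. (x has_vector_derivative Y) (at t) \<longrightarrow> ((\<lambda>t. V (x t)) has_real_derivative dV (x t) Y) (at t)"
    and dec: "\<forall>X. dist X (DFE P) < \<rho> \<longrightarrow> dV X (covid_field P X) \<le> -\<alpha> * V X" and rN: "\<rho> \<le> N0/12"
    using stab_core[OF R] by blast
  obtain G L B where lipG: "\<forall>x y. norm (G x - G y) \<le> L * norm (x - y)" and L: "L > 0"
    and bG: "\<forall>x. norm (G x) \<le> B" and GF: "\<forall>X. dist X (DFE P) \<le> \<rho> \<longrightarrow> G X = covid_field P X"
    using G_exists[OF rho rN] by blast
  show ?thesis
    by (rule las_generic[where F="covid_field P" and e="DFE P" and V=V and dV=dV and G=G and \<rho>=\<rho> and \<alpha>=\<alpha> and L=L and B=B and r=\<rho>, OF equilibrium k1 K Vlow[rule_format] Vup[rule_format] Vc Vd[rule_format]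
          dec[rule_format] al rho lipG[rule_format] L bG[rule_format] GF[rule_format] rho order_refl])
qed

end

theorem mainTheorem2:
  assumes "admissible_params P"
  shows "(R0 P < 1 \<longrightarrow> locally_asymptotically_stable (covid_field P) (DFE P)) \<and>
         (R0 P > 1 \<longrightarrow> unstable_equilibrium (covid_field P) (DFE P))"
proof -
  interpret covid P by (rule covid.intro) (rule assms)
  show ?thesis using stable unstable by blast
qed

end
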